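(* There exist $\alpha_0 < \infty$, $c > 0$ and $n_0 \in \mathbb N$ such that for all $n \geq n_0$, $\alpha > \alpha_0$, $y \in \Lambda_n$, every weakly $y$-admissible set $A$, every $\gamma_0 \in \mathcal L_A^{y \to \ell_n}$, and every pre-regeneration point $x \in \gamma_0$ with $\bar x - \bar y \geq \log n$, $$\mathbb P_A^{y \to \ell_n}\big(x \text{ is a regeneration point} \,\big|\, \gamma = \gamma_0\big) > c.$$
   Context: $\Lambda_n=([0,n]\times(-n/2,n/2]^{d-1})\cap\mathbb Z^d$ with nearest-neighbour edges and periodic boundary conditions in the last $d-1$ coordinates; points $x=(\bar x,\hat x)$; $\ell_j=\{x:\bar x=j\}$. For $A\subset\Lambda_n$, $\mathcal S_A^{a\to z}$ is the set of maps $\pi:A\to A$ that are bijections from $A\setminus\{z\}$ onto $A\setminus\{a\}$, with $\pi(z)=z$ and each $\pi(u)$ equal to $u$ or a neighbour of $u$; $\mathcal S_A^{a\to\ell_n}=\bigcup_{z\in\ell_n}\mathcal S_{A\cup\{z\}}^{a\to z}$ with probability $\mathbb P_A^{a\to\ell_n}(\pi)\propto\exp(-\alpha\sum_u\mathbb 1\{\pi(u)\ne u\})$; $\gamma(\pi)=\{\pi^j(a):j\ge0\}$ ordered by appearance. $\mathcal L_A^{y\to\ell_n}$ is the set of (vertex sets, with their visiting order, of) self-avoiding nearest-neighbour walks in $A$ from $y$ to some point of $\ell_n$. $\mathcal C_w=\{u:\bar u-\bar w\ge|\hat u-\hat w|\}\cup\{u:\bar u\ge\bar w+\log n\}$ (transverse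 distance $|\hat u-\hat w|$). $A$ is weakly $y$-admissible if $A\supset\{u:\bar u\ge\bar y+\log n\}$; $y$-admissible if moreover $A\supset\{u:\bar u\ge\bar y,\hat u=\hat y\}$; strictly $y$-admissible if moreover $A\supset\mathcal C_y$. A point $x\in\gamma$ is a pre-regeneration point if all $u\in\gamma$ with $u\ge x$ lie in $\mathcal C_x$ and all $u\in\gamma$ with $u<x$ satisfy $\bar u<\bar x$. For $\pi\in\mathcal S_A^{y\to\ell_n}$, let $\pi_0\in\mathcal S_A$ be $\pi_0(u)=u$ for $u\in\gamma(\pi)$ and $\pi_0(u)=\pi(u)$ otherwise. A pre-regeneration point $x$ of $\gamma(\pi)$ is a regeneration point if there is $R\subset A$ with (R1) $R\subset\{u:\bar u\ge\bar x\}$; (R2) $R$ strictly $x$-admissible; (R3) $(\bar u,2\hat x-\hat u)\in R$ whenever $u\in R$ (transverse coordinates modulo the periodic identification); (R4) $\pi_0(R)=R$. *)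

theory Defs
  imports Complex_Main
begin

text \<open>Points of the cylinder are integer lists of length d: the head is the
longitudinal coordinate (x bar), the tail the d-1 transverse coordinates (x hat).\<close>
type_synonym pt = "int list"

definition Lam :: "nat \<Rightarrow> nat \<Rightarrow> pt set" where
  "Lam d n = {x. length x = d \<and> 0 \<le> hd x \<and> hd x \<le> int n \<and>
                 (\<forall>i\<in>set (tl x). - int n < 2 * i \<and> 2 * i \<le> int n)}"

definition ell :: "nat \<Rightarrow> nat \<Rightarrow> nat \<Rightarrow> pt set" where
  "ell d n j = {x \<in> Lam d n. hd x = int j}"

definition tmod :: "nat \<Rightarrow> int \<Rightarrow> int" where
  "tmod n m = (let r = m mod int n in if 2 * r > int n then r - int n else r)"

definition cdist :: "nat \<Rightarrow> int \<Rightarrow> int \<Rightarrow> int" where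
  "cdist n p q = min ((p - q) mod int n) ((q - p) mod int n)"

definition tdist :: "nat \<Rightarrow> int list \<Rightarrow> int list \<Rightarrow> int" where
  "tdist n a b = sum_list (map2 (cdist n) a b)"

definition nbr :: "nat \<Rightarrow> nat \<Rightarrow> pt \<Rightarrow> pt \<Rightarrow> bool" where
  "nbr d n u v \<longleftrightarrow> u \<in> Lam d n \<and> v \<in> Lam d n \<and>
     ((\<bar>hd u - hd v\<bar> = 1 \<and> tl u = tl v) \<or> (hd u = hd v \<and> tdist n (tl u) (tl v) = 1))"

definition Cone :: "nat \<Rightarrow> nat \<Rightarrow> pt \<Rightarrow> pt set" where
  "Cone d n w = {u \<in> Lam d n. tdist n (tl u) (tl w) \<le> hd u - hd w}
              \<union> {u \<in> Lam d n. real_of_int (hd u) \<ge> real_of_int (hd w) + ln (real n)}"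

definition weakly_adm :: "nat \<Rightarrow> nat \<Rightarrow> pt \<Rightarrow> pt set \<Rightarrow> bool" where
  "weakly_adm d n y A \<longleftrightarrow>
     {u \<in> Lam d n. real_of_int (hd u) \<ge> real_of_int (hd y) + ln (real n)} \<subseteq> A"

definition adm :: "nat \<Rightarrow> nat \<Rightarrow> pt \<Rightarrow> pt set \<Rightarrow> bool" where
  "adm d n y A \<longleftrightarrow> weakly_adm d n y A \<and>
     {u \<in> Lam d n. hd u \<ge> hd y \<and> tl u = tl y} \<subseteq> A"

definition strictly_adm :: "nat \<Rightarrow> nat \<Rightarrow> pt \<Rightarrow> pt set \<Rightarrow> bool" where
  "strictly_adm d n y A \<longleftrightarrow> adm d n y A \<and> Cone d n y \<subseteq> A"

text \<open>S_B^{a->z}; maps are represented as total functions equal to the identity off B.\<close>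
definition Sfix :: "nat \<Rightarrow> nat \<Rightarrow> pt set \<Rightarrow> pt \<Rightarrow> pt \<Rightarrow> (pt \<Rightarrow> pt) set" where
  "Sfix d n B a z = {\<pi>. (\<forall>u. u \<notin> B \<longrightarrow> \<pi> u = u) \<and> z \<in> B \<and> \<pi> z = z \<and>
       bij_betw \<pi> (B - {z}) (B - {a}) \<and> (\<forall>u\<in>B. \<pi> u = u \<or> nbr d n u (\<pi> u))}"

definition Sline :: "nat \<Rightarrow> nat \<Rightarrow> pt set \<Rightarrow> pt \<Rightarrow> (pt \<Rightarrow> pt) set" where
  "Sline d n A a = (\<Union>z\<in>ell d n n. Sfix d n (A \<union> {z}) a z)"

definition wt :: "real \<Rightarrow> (pt \<Rightarrow> pt) \<Rightarrow> real" where
  "wt \<alpha> \<pi> = exp (- \<alpha> * real (card {u. \<pi> u \<noteq> u}))"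

definition gam :: "(pt \<Rightarrow> pt) \<Rightarrow> pt \<Rightarrow> pt list" where
  "gam \<pi> a = map (\<lambda>j. (\<pi> ^^ j) a) [0..<Suc (LEAST j. (\<pi> ^^ Suc j) a = (\<pi> ^^ j) a)]"

definition saw :: "nat \<Rightarrow> nat \<Rightarrow> pt set \<Rightarrow> pt \<Rightarrow> pt list \<Rightarrow> bool" where
  "saw d n A y \<gamma> \<longleftrightarrow> \<gamma> \<noteq> [] \<and> hd \<gamma> = y \<and> distinct \<gamma> \<and> set \<gamma> \<subseteq> A \<and>
     last \<gamma> \<in> ell d n n \<and> (\<forall>i. Suc i < length \<gamma> \<longrightarrow> nbr d n (\<gamma> ! i) (\<gamma> ! Suc i))"

text \<open>Pre-regeneration point of a path (order = order of appearance in the list).\<close>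
definition prereg :: "nat \<Rightarrow> nat \<Rightarrow> pt list \<Rightarrow> pt \<Rightarrow> bool" where
  "prereg d n \<gamma> x \<longleftrightarrow> x \<in> set \<gamma> \<and>
     (\<forall>i k. i < length \<gamma> \<longrightarrow> k < length \<gamma> \<longrightarrow> \<gamma> ! k = x \<longrightarrow>
        (k \<le> i \<longrightarrow> \<gamma> ! i \<in> Cone d n x) \<and> (i < k \<longrightarrow> hd (\<gamma> ! i) < hd x))"

definition pi0 :: "(pt \<Rightarrow> pt) \<Rightarrow> pt \<Rightarrow> pt \<Rightarrow> pt" where
  "pi0 \<pi> a = (\<lambda>u. if u \<in> set (gam \<pi> a) then u else \<pi> u)"

definition refl_pt :: "nat \<Rightarrow> pt \<Rightarrow> pt \<Rightarrow> pt" where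
  "refl_pt n x u = hd u # map2 (\<lambda>xi ui. tmod n (2 * xi - ui)) (tl x) (tl u)"

definition regen :: "nat \<Rightarrow> nat \<Rightarrow> pt set \<Rightarrow> pt \<Rightarrow> (pt \<Rightarrow> pt) \<Rightarrow> pt \<Rightarrow> bool" where
  "regen d n A a \<pi> x \<longleftrightarrow> prereg d n (gam \<pi> a) x \<and>
     (\<exists>R. R \<subseteq> A \<and> (\<forall>u\<in>R. hd x \<le> hd u) \<and> strictly_adm d n x R \<and>
          (\<forall>u\<in>R. refl_pt n x u \<in> R) \<and> pi0 \<pi> a ` R = R)"

definition cond_prob :: "nat \<Rightarrow> nat \<Rightarrow> real \<Rightarrow> pt set \<Rightarrow> pt \<Rightarrow> pt list \<Rightarrow> pt \<Rightarrow> real" where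
  "cond_prob d n \<alpha> A a \<gamma>0 x =
     (\<Sum>\<pi>\<in>{\<pi> \<in> Sline d n A a. gam \<pi> a = \<gamma>0 \<and> regen d n A a \<pi> x}. wt \<alpha> \<pi>) /
     (\<Sum>\<pi>\<in>{\<pi> \<in> Sline d n A a. gam \<pi> a = \<gamma>0}. wt \<alpha> \<pi>)"

end

theory Submission
  imports Defs "HOL-Library.FuncSet"
begin


lemma tmod_mod: "n \<ge> 1 \<Longrightarrow> tmod n m mod int n = m mod int n"
  unfolding tmod_def Let_def by auto

lemma tmod_range: "n \<ge> 1 \<Longrightarrow> - int n < 2 * tmod n m \<and> 2 * tmod n m \<le> int n"
proof -
  assume n: "n \<ge> 1"
  have "0 \<le> m mod int n" "m mod int n < int n" using n by simp_all
  then show ?thesis unfolding tmod_def Let_def by auto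
qed

lemma tmod_id: "n \<ge> 1 \<Longrightarrow> - int n < 2 * m \<Longrightarrow> 2 * m \<le> int n \<Longrightarrow> tmod n m = m"
proof -
  assume n: "n \<ge> 1" and a: "- int n < 2 * m" "2 * m \<le> int n"
  show ?thesis
  proof (cases "m \<ge> 0")
    case True
    then have "m mod int n = m" using a n by (intro mod_pos_pos_trivial) auto
    then show ?thesis using a unfolding tmod_def Let_def by auto
  next
    case False
    have "(m + int n) mod int n = m + int n" using a n False by (intro mod_pos_pos_trivial) linarith+
    then have "m mod int n = m + int n" by simp
    then show ?thesis using a False unfolding tmod_def Let_def by auto
  qed
qed

lemma tmod_cong: "a mod int n = b mod int n \<Longrightarrow> tmod n a = tmod n b"
  unfolding tmod_def by simp

lemma cdist_nonneg: "n \<ge> 1 \<Longrightarrow> 0 \<le> cdist n p q"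
  unfolding cdist_def by simp

lemma cdist_self: "cdist n p p = 0"
  unfolding cdist_def by simp

lemma cdist_lt: "n \<ge> 1 \<Longrightarrow> cdist n p q < int n"
proof -
  assume n: "n \<ge> 1"
  have "(p - q) mod int n < int n" using n by simp
  then show ?thesis unfolding cdist_def by simp
qed

lemma cdist_le:
  assumes n: "n \<ge> 1" and r: "- int n < 2 * p" "2 * p \<le> int n" and c: "cdist n p q \<le> h"
  shows "p \<in> tmod n ` {q - h..q + h}"
proof -
  have p: "tmod n p = p" using tmod_id[OF n r] .
  have "(p - q) mod int n \<le> h \<or> (q - p) mod int n \<le> h" using c unfolding cdist_def by linarith
  then show ?thesis
  proof
    assume h1: "(p - q) mod int n \<le> h"
    let ?r = "(p - q) mod int n"
    have "0 \<le> ?r" using n by simp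
    moreover have "(q + ?r) mod int n = p mod int n" by (simp add: mod_add_right_eq)
    ultimately show ?thesis using h1 p tmod_cong[of "q + ?r" n p]
      by (intro image_eqI[of _ _ "q + ?r"]) auto
  next
    assume h1: "(q - p) mod int n \<le> h"
    let ?r = "(q - p) mod int n"
    have "0 \<le> ?r" using n by simp
    moreover have "(q - ?r) mod int n = p mod int n" by (simp add: mod_diff_right_eq)
    ultimately show ?thesis using h1 p tmod_cong[of "q - ?r" n p]
      by (intro image_eqI[of _ _ "q - ?r"]) auto
  qed
qed

lemma tdist_nth_le:
  assumes "length a = length b" "i < length a" "n \<ge> 1"
  shows "cdist n (a ! i) (b ! i) \<le> tdist n a b"
  using assms
proof (induction a b arbitrary: i rule: list_induct2)
  case Nil then show ?case by simp
next
  case (Cons u a v b)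
  have s: "tdist n (u # a) (v # b) = cdist n u v + tdist n a b" unfolding tdist_def by simp
  have nn: "0 \<le> tdist n a b" unfolding tdist_def
    using Cons.prems(2) by (intro sum_list_nonneg) (auto simp: cdist_nonneg[OF Cons.prems(2)] set_zip)
  show ?case
  proof (cases i)
    case 0 then show ?thesis using s nn by simp
  next
    case (Suc j)
    have "cdist n (a ! j) (b ! j) \<le> tdist n a b" using Cons.IH[of j] Cons.prems Suc by simp
    then show ?thesis using s cdist_nonneg[of n u v] Cons.prems Suc by simp
  qed
qed

lemma tdist_self: "tdist n a a = 0"
  unfolding tdist_def by (induction a) (auto simp: cdist_self)

lemma tdist_nonneg: "n \<ge> 1 \<Longrightarrow> 0 \<le> tdist n a b"
  unfolding tdist_def by (intro sum_list_nonneg) (auto simp: cdist_nonneg set_zip)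

lemma card_lists_box:
  assumes "\<And>i. i < k \<Longrightarrow> finite (T i)"
  shows "finite {v. length v = k \<and> (\<forall>i<k. v ! i \<in> T i)} \<and>
         card {v. length v = k \<and> (\<forall>i<k. v ! i \<in> T i)} \<le> (\<Prod>i<k. card (T i))"
  using assms
proof (induction k arbitrary: T)
  case 0
  have "{v. length v = 0 \<and> (\<forall>i<0. v ! i \<in> T i)} = {[]}" by auto
  then show ?case by simp
next
  case (Suc k)
  let ?S = "{v. length v = k \<and> (\<forall>i<k. v ! i \<in> T (Suc i))}"
  have IH: "finite ?S \<and> card ?S \<le> (\<Prod>i<k. card (T (Suc i)))"
    using Suc.IH[of "\<lambda>i. T (Suc i)"] Suc.prems by auto
  have eq: "{v. length v = Suc k \<and> (\<forall>i<Suc k. v ! i \<in> T i)} = (\<lambda>(a, ys). a # ys) ` (T 0 \<times> ?S)"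
  proof (rule set_eqI, rule iffI)
    fix v assume "v \<in> {v. length v = Suc k \<and> (\<forall>i<Suc k. v ! i \<in> T i)}"
    then obtain a ys where v: "v = a # ys" "length ys = k" and h: "\<forall>i<Suc k. v ! i \<in> T i"
      by (cases v) auto
    have "a \<in> T 0" using h v by auto
    moreover have "ys \<in> ?S" using h v by auto
    ultimately show "v \<in> (\<lambda>(a, ys). a # ys) ` (T 0 \<times> ?S)" using v by auto
  next
    fix v assume "v \<in> (\<lambda>(a, ys). a # ys) ` (T 0 \<times> ?S)"
    then show "v \<in> {v. length v = Suc k \<and> (\<forall>i<Suc k. v ! i \<in> T i)}"
      by (auto simp: less_Suc_eq_0_disj)
  qed
  have f0: "finite (T 0)" using Suc.prems by auto
  have "card ((\<lambda>(a, ys). a # ys) ` (T 0 \<times> ?S)) \<le> card (T 0 \<times> ?S)"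
    using IH f0 by (intro card_image_le) auto
  also have "\<dots> = card (T 0) * card ?S" by (simp add: card_cartesian_product)
  also have "\<dots> \<le> card (T 0) * (\<Prod>i<k. card (T (Suc i)))" using IH by simp
  also have "\<dots> = (\<Prod>i<Suc k. card (T i))" by (rule prod.lessThan_Suc_shift[symmetric])
  finally show ?case using eq IH f0 by auto
qed


lemma Lam_len: "u \<in> Lam d n \<Longrightarrow> length u = d"
  unfolding Lam_def by auto

lemma Lam_tl: "u \<in> Lam d n \<Longrightarrow> i \<in> set (tl u) \<Longrightarrow> - int n < 2 * i \<and> 2 * i \<le> int n"
  unfolding Lam_def by auto

lemma Lam_hd: "u \<in> Lam d n \<Longrightarrow> 0 \<le> hd u \<and> hd u \<le> int n"
  unfolding Lam_def by auto

lemma finite_Lam: "finite (Lam d n)"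
proof -
  have "Lam d n \<subseteq> {v. set v \<subseteq> {- int n..int n} \<and> length v = d}"
  proof
    fix v assume v: "v \<in> Lam d n"
    have "set v \<subseteq> {- int n..int n}"
    proof
      fix i assume i: "i \<in> set v"
      show "i \<in> {- int n..int n}"
      proof (cases v)
        case Nil then show ?thesis using i by simp
      next
        case (Cons a w)
        then have "i = hd v \<or> i \<in> set (tl v)" using i by auto
        then show ?thesis using Lam_hd[OF v] Lam_tl[OF v, of i] by auto
      qed
    qed
    then show "v \<in> {v. set v \<subseteq> {- int n..int n} \<and> length v = d}" using Lam_len[OF v] by auto
  qed
  moreover have "finite {v. set v \<subseteq> {- int n..int n} \<and> length v = d}"
    by (rule finite_lists_length_eq) simp
  ultimately show ?thesis by (rule finite_subset)
qed

definition bx :: "nat \<Rightarrow> pt \<Rightarrow> nat \<Rightarrow> nat \<Rightarrow> int set" where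
  "bx n a h i = (if i = 0 then {hd a - int h..hd a + int h}
                 else tmod n ` {tl a ! (i - 1) - int h..tl a ! (i - 1) + int h})"

definition box :: "nat \<Rightarrow> nat \<Rightarrow> pt \<Rightarrow> nat \<Rightarrow> pt set" where
  "box d n a h = {v. length v = d \<and> (\<forall>i<d. v ! i \<in> bx n a h i)}"

lemma card_bx: "finite (bx n a h i) \<and> card (bx n a h i) \<le> 2 * h + 1"
proof -
  have c: "card {c - int h..c + int h} = 2 * h + 1" for c
    by (simp add: nat_add_distrib nat_mult_distrib)
  show ?thesis
  proof (cases "i = 0")
    case True then show ?thesis using c unfolding bx_def by simp
  next
    case False then show ?thesis unfolding bx_def using c card_image_le[of "{tl a ! (i - 1) - int h..tl a ! (i - 1) + int h}" "tmod n"]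
      by simp
  qed
qed

lemma card_box: "finite (box d n a h) \<and> card (box d n a h) \<le> (2 * h + 1) ^ d"
proof -
  have "finite (box d n a h) \<and> card (box d n a h) \<le> (\<Prod>i<d. card (bx n a h i))"
    unfolding box_def by (rule card_lists_box) (simp add: card_bx)
  moreover have "(\<Prod>i<d. card (bx n a h i)) \<le> (\<Prod>i<d. 2 * h + 1)"
    using card_bx[THEN conjunct2] by (intro prod_mono) auto
  ultimately show ?thesis by simp
qed

lemma in_box:
  assumes n: "n \<ge> 1" and d: "d \<ge> 1" and a: "a \<in> Lam d n" and v: "v \<in> Lam d n"
    and h1: "\<bar>hd v - hd a\<bar> \<le> int h"
    and h2: "\<And>i. i < d - 1 \<Longrightarrow> cdist n (tl v ! i) (tl a ! i) \<le> int h"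
  shows "v \<in> box d n a h"
  unfolding box_def
proof (intro CollectI conjI allI impI)
  show lv: "length v = d" using Lam_len[OF v] .
  fix i assume i: "i < d"
  show "v ! i \<in> bx n a h i"
  proof (cases i)
    case 0
    have "v ! 0 = hd v" using lv d by (cases v) auto
    then show ?thesis using 0 h1 unfolding bx_def by auto
  next
    case (Suc j)
    have vi: "v ! i = tl v ! j" using lv d Suc by (cases v) auto
    have j: "j < length (tl v)" using lv i Suc by simp
    have "tl v ! j \<in> set (tl v)" using j by simp
    then have r: "- int n < 2 * (tl v ! j) \<and> 2 * (tl v ! j) \<le> int n" using Lam_tl[OF v] by blast
    have "tl v ! j \<in> tmod n ` {tl a ! j - int h..tl a ! j + int h}"
      using cdist_le[OF n _ _ h2[of j]] r i Suc by auto
    then show ?thesis using vi Suc unfolding bx_def by simp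
  qed
qed

lemma nbr_Lam: "nbr d n u v \<Longrightarrow> u \<in> Lam d n \<and> v \<in> Lam d n"
  unfolding nbr_def by auto

lemma nbr_hd: "nbr d n u v \<Longrightarrow> \<bar>hd u - hd v\<bar> \<le> 1"
  unfolding nbr_def by auto

lemma nbr_box:
  assumes n: "n \<ge> 1" and d: "d \<ge> 1" and nb: "nbr d n u v"
  shows "v \<in> box d n u 1"
proof -
  have u: "u \<in> Lam d n" and v: "v \<in> Lam d n" using nbr_Lam[OF nb] by auto
  have lu: "length (tl u) = d - 1" and lv: "length (tl v) = d - 1" using Lam_len[OF u] Lam_len[OF v] by auto
  show ?thesis
  proof (rule in_box[OF n d u v])
    show "\<bar>hd v - hd u\<bar> \<le> int 1" using nbr_hd[OF nb] by simp
    fix i assume i: "i < d - 1"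
    show "cdist n (tl v ! i) (tl u ! i) \<le> int 1"
    proof (cases "tl u = tl v")
      case True then show ?thesis by (simp add: cdist_self)
    next
      case False
      then have "tdist n (tl u) (tl v) = 1" using nb unfolding nbr_def by auto
      moreover have "cdist n (tl u ! i) (tl v ! i) \<le> tdist n (tl u) (tl v)"
        using tdist_nth_le[of "tl u" "tl v" i n] lu lv i n by simp
      moreover have "cdist n (tl v ! i) (tl u ! i) = cdist n (tl u ! i) (tl v ! i)"
        unfolding cdist_def by simp
      ultimately show ?thesis by simp
    qed
  qed
qed

lemma card_nbr: "n \<ge> 1 \<Longrightarrow> d \<ge> 1 \<Longrightarrow> finite {v. nbr d n u v} \<and> card {v. nbr d n u v} \<le> 3 ^ d"
proof -
  assume n: "n \<ge> 1" and d: "d \<ge> 1"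
  have sub: "{v. nbr d n u v} \<subseteq> box d n u 1" using nbr_box[OF n d] by auto
  have "card (box d n u 1) \<le> 3 ^ d" using card_box[of d n u 1] by simp
  then show ?thesis using sub card_box[of d n u 1] card_mono[OF _ sub] finite_subset[OF sub] by force
qed

lemma Lam_box: "n \<ge> 1 \<Longrightarrow> d \<ge> 1 \<Longrightarrow> a \<in> Lam d n \<Longrightarrow> Lam d n \<subseteq> box d n a n"
proof
  fix v assume n: "n \<ge> 1" and d: "d \<ge> 1" and a: "a \<in> Lam d n" and v: "v \<in> Lam d n"
  show "v \<in> box d n a n"
  proof (rule in_box[OF n d a v])
    show "\<bar>hd v - hd a\<bar> \<le> int n" using Lam_hd[OF a] Lam_hd[OF v] by auto
    fix i show "cdist n (tl v ! i) (tl a ! i) \<le> int n" using cdist_lt[OF n] less_imp_le by blast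
  qed
qed

lemma card_Lam: "n \<ge> 1 \<Longrightarrow> d \<ge> 1 \<Longrightarrow> a \<in> Lam d n \<Longrightarrow> card (Lam d n) \<le> (2 * n + 1) ^ d"
  using Lam_box card_box card_mono by (metis order_trans)

lemma refl_hd: "hd (refl_pt n x u) = hd u"
  unfolding refl_pt_def by simp

lemma refl_Lam:
  assumes n: "n \<ge> 1" and d: "d \<ge> 1" and x: "x \<in> Lam d n" and u: "u \<in> Lam d n"
  shows "refl_pt n x u \<in> Lam d n"
proof -
  have lx: "length x = d" and lu: "length u = d" using Lam_len x u by auto
  show ?thesis unfolding Lam_def refl_pt_def
    using Lam_hd[OF u] lx lu tmod_range[OF n] d by (auto simp: set_zip)
qed

lemma refl_refl:
  assumes n: "n \<ge> 1" and d: "d \<ge> 1" and x: "x \<in> Lam d n" and u: "u \<in> Lam d n"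
  shows "refl_pt n x (refl_pt n x u) = u"
proof -
  have lx: "length x = d" and lu: "length u = d" using Lam_len x u by auto
  have e: "tmod n (2 * a - tmod n (2 * a - b)) = b" if b: "b \<in> set (tl u)" for a b
  proof -
    have "(2 * a - tmod n (2 * a - b)) mod int n = (2 * a - tmod n (2 * a - b) mod int n) mod int n"
      by (simp add: mod_diff_right_eq)
    also have "\<dots> = (2 * a - (2 * a - b) mod int n) mod int n" using tmod_mod[OF n] by simp
    also have "\<dots> = b mod int n" by (simp add: mod_diff_right_eq)
    finally have "tmod n (2 * a - tmod n (2 * a - b)) = tmod n b" by (rule tmod_cong)
    also have "\<dots> = b" using tmod_id[OF n] Lam_tl[OF u b] by blast
    finally show ?thesis .
  qed
  have "map2 (\<lambda>xi ui. tmod n (2 * xi - ui)) (tl x) (map2 (\<lambda>xi ui. tmod n (2 * xi - ui)) (tl x) (tl u)) = tl u"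
  proof (rule nth_equalityI)
    show "length (map2 (\<lambda>xi ui. tmod n (2 * xi - ui)) (tl x) (map2 (\<lambda>xi ui. tmod n (2 * xi - ui)) (tl x) (tl u))) = length (tl u)"
      using lx lu by simp
    fix i assume "i < length (map2 (\<lambda>xi ui. tmod n (2 * xi - ui)) (tl x) (map2 (\<lambda>xi ui. tmod n (2 * xi - ui)) (tl x) (tl u)))"
    then have i: "i < length (tl u)" "i < length (tl x)" using lx lu by auto
    then show "map2 (\<lambda>xi ui. tmod n (2 * xi - ui)) (tl x) (map2 (\<lambda>xi ui. tmod n (2 * xi - ui)) (tl x) (tl u)) ! i = tl u ! i"
      using e[of "tl u ! i" "tl x ! i"] by simp
  qed
  moreover have "u \<noteq> []" using lu d by auto
  ultimately show ?thesis unfolding refl_pt_def by (cases u) auto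
qed


locale sf =
  fixes d n :: nat and B :: "pt set" and y z :: pt and \<pi> :: "pt \<Rightarrow> pt"
  assumes fB: "finite B" and yB: "y \<in> B" and sfx: "\<pi> \<in> Sfix d n B y z"
begin

lemma out: "u \<notin> B \<Longrightarrow> \<pi> u = u" using sfx unfolding Sfix_def by auto
lemma zB: "z \<in> B" using sfx unfolding Sfix_def by auto
lemma pz: "\<pi> z = z" using sfx unfolding Sfix_def by auto
lemma bij: "bij_betw \<pi> (B - {z}) (B - {y})" using sfx unfolding Sfix_def by auto
lemma nb: "u \<in> B \<Longrightarrow> \<pi> u = u \<or> nbr d n u (\<pi> u)" using sfx unfolding Sfix_def by auto
lemma injB: "inj_on \<pi> (B - {z})" using bij by (simp add: bij_betw_def)
lemma imB: "\<pi> ` (B - {z}) = B - {y}" using bij by (simp add: bij_betw_def)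

lemma mapsB: "v \<in> B \<Longrightarrow> \<pi> v \<in> B"
  using imB pz by (cases "v = z") auto

lemma notY: "v \<in> B \<Longrightarrow> v \<noteq> z \<Longrightarrow> \<pi> v \<noteq> y"
  using imB by auto

lemma itB: "(\<pi> ^^ j) y \<in> B"
  by (induction j) (auto simp: yB mapsB)

lemma ex_fix: "\<exists>j. (\<pi> ^^ Suc j) y = (\<pi> ^^ j) y"
proof (rule ccontr)
  assume nf: "\<not> ?thesis"
  have key: "\<forall>j. i < j \<longrightarrow> (\<pi> ^^ i) y \<noteq> (\<pi> ^^ j) y" for i
  proof (induction i)
    case 0
    show ?case
    proof (intro allI impI)
      fix j :: nat assume j: "0 < j"
      then obtain j' where j': "j = Suc j'" by (cases j) auto
      let ?w = "(\<pi> ^^ j') y"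
      have wB: "?w \<in> B" by (rule itB)
      have "?w \<noteq> z" using nf pz by (metis funpow.simps(2) o_apply)
      then have "\<pi> ?w \<noteq> y" using notY wB by blast
      then show "(\<pi> ^^ 0) y \<noteq> (\<pi> ^^ j) y" using j' by simp
    qed
  next
    case (Suc i)
    show ?case
    proof (intro allI impI)
      fix j :: nat assume j: "Suc i < j"
      then obtain j' where j': "j = Suc j'" by (cases j) auto
      let ?a = "(\<pi> ^^ i) y" and ?b = "(\<pi> ^^ j') y"
      have az: "?a \<noteq> z" using nf pz by (metis funpow.simps(2) o_apply)
      have bz: "?b \<noteq> z" using nf pz by (metis funpow.simps(2) o_apply)
      have ab: "?a \<noteq> ?b" using Suc.IH j j' by auto
      have "\<pi> ?a \<noteq> \<pi> ?b" using injB az bz ab itB[of i] itB[of j'] by (meson DiffI inj_on_contraD singletonD)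
      then show "(\<pi> ^^ Suc i) y \<noteq> (\<pi> ^^ j) y" using j' by simp
    qed
  qed
  then have "inj (\<lambda>j. (\<pi> ^^ j) y)" by (metis injI linorder_neqE_nat)
  moreover have "range (\<lambda>j. (\<pi> ^^ j) y) \<subseteq> B" using itB by auto
  ultimately have "finite (UNIV :: nat set)" using fB by (meson finite_imageD finite_subset)
  then show False by simp
qed

definition L where "L = (LEAST j. (\<pi> ^^ Suc j) y = (\<pi> ^^ j) y)"

lemma L_fix: "(\<pi> ^^ Suc L) y = (\<pi> ^^ L) y"
  unfolding L_def using ex_fix by (rule LeastI_ex)

lemma L_min: "j < L \<Longrightarrow> (\<pi> ^^ Suc j) y \<noteq> (\<pi> ^^ j) y"
  unfolding L_def using not_less_Least by blast

lemma it_ge: "L \<le> j \<Longrightarrow> (\<pi> ^^ j) y = (\<pi> ^^ L) y"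
proof (induction j rule: dec_induct)
  case base then show ?case by simp
next
  case (step j)
  have "(\<pi> ^^ Suc j) y = \<pi> ((\<pi> ^^ j) y)" by simp
  also have "\<dots> = \<pi> ((\<pi> ^^ L) y)" using step by simp
  also have "\<dots> = (\<pi> ^^ L) y" using L_fix by simp
  finally show ?case .
qed

lemma gam_eq: "gam \<pi> y = map (\<lambda>j. (\<pi> ^^ j) y) [0..<Suc L]"
  unfolding gam_def L_def by simp

lemma gam_len: "length (gam \<pi> y) = Suc L" by (simp add: gam_eq)

lemma gam_nth: "j \<le> L \<Longrightarrow> gam \<pi> y ! j = (\<pi> ^^ j) y"
  by (simp add: gam_eq nth_map_upt del: upt_Suc)

lemma set_gam: "set (gam \<pi> y) = {(\<pi> ^^ j) y | j. j \<le> L}"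
proof -
  have "set (gam \<pi> y) = (\<lambda>j. (\<pi> ^^ j) y) ` {0..<Suc L}" by (simp add: gam_eq del: upt_Suc)
  then show ?thesis by (auto simp: less_Suc_eq_le)
qed

lemma it_in: "(\<pi> ^^ j) y \<in> set (gam \<pi> y)"
proof (cases "j \<le> L")
  case True then show ?thesis by (auto simp: set_gam)
next
  case False then show ?thesis using it_ge[of j] by (auto simp: set_gam)
qed

lemma y_gam: "y \<in> set (gam \<pi> y)" using it_in[of 0] by simp

lemma gam_closed: "v \<in> set (gam \<pi> y) \<Longrightarrow> \<pi> v \<in> set (gam \<pi> y)"
proof -
  assume "v \<in> set (gam \<pi> y)"
  then obtain j where "v = (\<pi> ^^ j) y" by (auto simp: set_gam)
  then have "\<pi> v = (\<pi> ^^ Suc j) y" by simp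
  moreover have "(\<pi> ^^ Suc j) y \<in> set (gam \<pi> y)" by (rule it_in)
  ultimately show ?thesis by simp
qed

lemma gam_B: "set (gam \<pi> y) \<subseteq> B" using itB by (auto simp: set_gam)

lemma L_z: "(\<pi> ^^ L) y = z"
proof (rule ccontr)
  let ?w = "(\<pi> ^^ L) y"
  assume wz: "?w \<noteq> z"
  have pw: "\<pi> ?w = ?w" using L_fix by simp
  have wy: "?w \<noteq> y" using notY[OF itB wz] pw by simp
  then have "L \<noteq> 0" by (cases L) auto
  then obtain L' where L': "L = Suc L'" by (cases L) auto
  let ?v = "(\<pi> ^^ L') y"
  have pv: "\<pi> ?v = ?w" using L' by simp
  have vw: "?v \<noteq> ?w" using L_min[of L'] L' by simp
  have vz: "?v \<noteq> z" using pv pz wz by auto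
  have "\<pi> ?v = \<pi> ?w" using pv pw by simp
  then have "?v = ?w" using injB itB[of L'] itB[of L] vz wz by (meson DiffI inj_on_contraD singletonD)
  then show False using vw by simp
qed

lemma z_gam: "z \<in> set (gam \<pi> y)" using it_in[of L] L_z by simp

lemma last_gam: "last (gam \<pi> y) = z"
proof -
  have ne: "gam \<pi> y \<noteq> []" using gam_len by auto
  then have "last (gam \<pi> y) = gam \<pi> y ! L" using gam_len by (simp add: last_conv_nth)
  then show ?thesis using gam_nth[of L] L_z by simp
qed

lemma pre_gam:
  assumes dist: "distinct (gam \<pi> y)" and a: "a \<in> B" "a \<notin> set (gam \<pi> y)" and pa: "\<pi> a \<in> set (gam \<pi> y)"
  shows False
proof -
  obtain j where j: "j \<le> L" "\<pi> a = (\<pi> ^^ j) y" using pa by (auto simp: set_gam)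
  have az: "a \<noteq> z" using a z_gam by auto
  show False
  proof (cases j)
    case 0 then show False using notY[OF a(1) az] j by simp
  next
    case (Suc j')
    let ?b = "(\<pi> ^^ j') y"
    have "gam \<pi> y ! j' \<noteq> gam \<pi> y ! L" using dist j Suc gam_len by (simp add: nth_eq_iff_index_eq)
    then have bz: "?b \<noteq> z" using gam_nth[of j'] gam_nth[of L] L_z j Suc by simp
    have "\<pi> a = \<pi> ?b" using j Suc by simp
    then have "a = ?b" using injB a(1) itB[of j'] az bz by (meson DiffI inj_on_contraD singletonD)
    then show False using a(2) it_in by simp
  qed
qed

abbreviation p where "p \<equiv> pi0 \<pi> y"

lemma p_out: "v \<notin> B \<Longrightarrow> p v = v" unfolding pi0_def using out by simp

lemma p_gam: "v \<in> set (gam \<pi> y) \<Longrightarrow> p v = v" unfolding pi0_def by simp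

lemma p_B: "v \<in> B \<Longrightarrow> p v \<in> B" unfolding pi0_def using mapsB by simp

lemma p_moved: "p v \<noteq> v \<Longrightarrow> v \<in> B \<and> v \<notin> set (gam \<pi> y) \<and> p v = \<pi> v \<and> nbr d n v (p v)"
proof -
  assume pv: "p v \<noteq> v"
  then have vg: "v \<notin> set (gam \<pi> y)" and e: "p v = \<pi> v" unfolding pi0_def by (auto split: if_splits)
  have vB: "v \<in> B" using pv e out by auto
  show ?thesis using vg e vB nb[OF vB] pv by auto
qed

lemma p_inj: assumes dist: "distinct (gam \<pi> y)" shows "inj p"
proof (rule injI)
  fix a b assume e: "p a = p b"
  have c: "a \<in> B \<Longrightarrow> a \<notin> set (gam \<pi> y) \<Longrightarrow> a \<noteq> z" for a using z_gam by auto
  show "a = b"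
  proof (cases "a \<in> set (gam \<pi> y)")
    case ag: True
    show ?thesis
    proof (cases "b \<in> set (gam \<pi> y)")
      case True then show ?thesis using e ag by (simp add: pi0_def)
    next
      case bg: False
      show ?thesis
      proof (cases "b \<in> B")
        case True
        then have "\<pi> b = a" using e ag bg by (simp add: pi0_def)
        then show ?thesis using pre_gam[OF dist True bg] ag by simp
      next
        case False then show ?thesis using e ag bg out gam_B by (auto simp: pi0_def)
      qed
    qed
  next
    case ag: False
    show ?thesis
    proof (cases "b \<in> set (gam \<pi> y)")
      case bg: True
      show ?thesis
      proof (cases "a \<in> B")
        case True
        then have "\<pi> a = b" using e ag bg by (simp add: pi0_def)
        then show ?thesis using pre_gam[OF dist True ag] bg by simp
      next
        case False then show ?thesis using e ag bg out gam_B by (auto simp: pi0_def)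
      qed
    next
      case bg: False
      then have e2: "\<pi> a = \<pi> b" using e ag by (simp add: pi0_def)
      show ?thesis
      proof (cases "a \<in> B")
        case aB: True
        show ?thesis
        proof (cases "b \<in> B")
          case True
          then show ?thesis using injB e2 aB c[OF aB ag] c[OF True bg] by (meson DiffI inj_on_contraD singletonD)
        next
          case False then show ?thesis using e2 out mapsB[OF aB] by auto
        qed
      next
        case aB: False
        show ?thesis
        proof (cases "b \<in> B")
          case True then show ?thesis using e2 out mapsB[OF True] aB by auto
        next
          case False then show ?thesis using e2 out aB by auto
        qed
      qed
    qed
  qed
qed

lemma p_onto: assumes dist: "distinct (gam \<pi> y)" shows "p ` B = B"
  using endo_inj_surj[OF fB] p_B p_inj[OF dist] by (meson image_subsetI inj_on_subset subset_UNIV)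

lemma p_surj: assumes dist: "distinct (gam \<pi> y)" shows "\<exists>w. p w = v \<and> (v \<in> B \<longrightarrow> w \<in> B)"
proof (cases "v \<in> B")
  case True then show ?thesis using p_onto[OF dist] by (metis imageE)
next
  case False then show ?thesis using p_out by blast
qed

lemma p_cycle: assumes dist: "distinct (gam \<pi> y)" and pc: "p c \<noteq> c"
  obtains m where "m > 0" "(p ^^ m) c = c"
proof -
  have cB: "c \<in> B" using p_moved[OF pc] by simp
  have "(p ^^ k) c \<in> B" for k by (induction k) (auto simp: cB p_B)
  then have "{v. \<exists>k. v = (p ^^ k) c} \<subseteq> B" by auto
  then have "finite {v. \<exists>k. v = (p ^^ k) c}" using fB finite_subset by blast
  then show ?thesis using funpow_inj_finite[OF p_inj[OF dist]] that by blast
qed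

end


locale mc =
  fixes d n :: nat and A :: "pt set" and y :: pt and g :: "pt list" and x :: pt
  assumes n1: "n \<ge> 1" and d2: "d \<ge> 2" and AL: "A \<subseteq> Lam d n" and wadm: "weakly_adm d n y A"
    and sw: "saw d n A y g" and xg: "x \<in> set g"
    and xh: "real_of_int (hd x - hd y) \<ge> ln (real n)"
begin

definition zz where "zz = last g"

lemma g_ne: "g \<noteq> []" using sw unfolding saw_def by auto
lemma g_hd: "hd g = y" using sw unfolding saw_def by auto
lemma g_dist: "distinct g" using sw unfolding saw_def by auto
lemma g_A: "set g \<subseteq> A" using sw unfolding saw_def by auto
lemma zz_ell: "zz \<in> ell d n n" using sw unfolding saw_def zz_def by auto
lemma g_nbr: "Suc i < length g \<Longrightarrow> nbr d n (g ! i) (g ! Suc i)" using sw unfolding saw_def by auto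
lemma yA: "y \<in> A" using g_ne g_hd g_A by (metis hd_in_set subsetD)
lemma zzA: "zz \<in> A" using g_ne g_A unfolding zz_def by (metis last_in_set subsetD)
lemma fA: "finite A" using AL finite_Lam finite_subset by blast
lemma xA: "x \<in> A" using xg g_A by auto
lemma xL: "x \<in> Lam d n" using xA AL by auto
lemma d1: "d \<ge> 1" using d2 by simp
lemma g0: "g ! 0 = y" using g_ne g_hd by (simp add: hd_conv_nth)

definition S where "S = {\<pi> \<in> Sline d n A y. gam \<pi> y = g}"

lemma S_char: "\<pi> \<in> S \<longleftrightarrow> \<pi> \<in> Sfix d n A y zz \<and> gam \<pi> y = g"
proof
  assume a: "\<pi> \<in> S"
  then obtain z where z: "z \<in> ell d n n" "\<pi> \<in> Sfix d n (A \<union> {z}) y z" and gg: "gam \<pi> y = g"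
    unfolding S_def Sline_def by auto
  have zL: "z \<in> Lam d n" using z unfolding ell_def by auto
  interpret sf d n "A \<union> {z}" y z \<pi>
    using z(2) fA yA by unfold_locales auto
  have "z = zz" using last_gam gg unfolding zz_def by simp
  then show "\<pi> \<in> Sfix d n A y zz \<and> gam \<pi> y = g" using z(2) zzA gg by (simp add: insert_absorb)
next
  assume a: "\<pi> \<in> Sfix d n A y zz \<and> gam \<pi> y = g"
  then have "\<pi> \<in> Sfix d n (A \<union> {zz}) y zz" using zzA by (simp add: insert_absorb)
  then show "\<pi> \<in> S" using a zz_ell unfolding S_def Sline_def by auto
qed

lemma S_sf: "\<pi> \<in> S \<Longrightarrow> sf d n A y zz \<pi>"
  using S_char fA yA by unfold_locales auto

lemma S_gam: "\<pi> \<in> S \<Longrightarrow> gam \<pi> y = g" using S_char by auto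

lemma finite_S: "finite S"
proof -
  have sub: "(\<lambda>\<pi>. restrict \<pi> A) ` S \<subseteq> (\<Pi>\<^sub>E i \<in> A. A)"
  proof (rule image_subsetI)
    fix \<pi> assume "\<pi> \<in> S"
    then interpret sf d n A y zz \<pi> by (rule S_sf)
    show "restrict \<pi> A \<in> (\<Pi>\<^sub>E i \<in> A. A)" using mapsB by auto
  qed
  moreover have "inj_on (\<lambda>\<pi>. restrict \<pi> A) S"
  proof (rule inj_onI)
    fix \<pi>1 \<pi>2 assume p1: "\<pi>1 \<in> S" and p2: "\<pi>2 \<in> S" and e: "restrict \<pi>1 A = restrict \<pi>2 A"
    have o1: "u \<notin> A \<Longrightarrow> \<pi>1 u = u" for u using sf.out[OF S_sf[OF p1]] by blast
    have o2: "u \<notin> A \<Longrightarrow> \<pi>2 u = u" for u using sf.out[OF S_sf[OF p2]] by blast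
    show "\<pi>1 = \<pi>2"
    proof
      fix u show "\<pi>1 u = \<pi>2 u"
      proof (cases "u \<in> A")
        case True then show ?thesis using e by (metis restrict_apply')
      next
        case False then show ?thesis using o1 o2 by simp
      qed
    qed
  qed
  moreover have "finite (\<Pi>\<^sub>E i \<in> A. A)" using fA by (intro finite_PiE) auto
  ultimately have "finite ((\<lambda>\<pi>. restrict \<pi> A) ` S)" "inj_on (\<lambda>\<pi>. restrict \<pi> A) S"
    using finite_subset by blast+
  then show ?thesis using finite_imageD by blast
qed

definition pstar :: "pt \<Rightarrow> pt" where
  "pstar v = (case map_of (zip (butlast g) (tl g)) v of None \<Rightarrow> v | Some w \<Rightarrow> w)"

lemma len_bt: "length (butlast g) = length (tl g)" by simp

lemma pstar_nth: "Suc i < length g \<Longrightarrow> pstar (g ! i) = g ! Suc i"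
proof -
  assume i: "Suc i < length g"
  have "map_of (zip (butlast g) (tl g)) (butlast g ! i) = Some (tl g ! i)"
    using i by (intro map_of_zip_nth) (auto simp: distinct_butlast g_dist)
  moreover have "butlast g ! i = g ! i" using i by (simp add: nth_butlast)
  moreover have "tl g ! i = g ! Suc i" using i by (simp add: nth_tl)
  ultimately show ?thesis unfolding pstar_def by simp
qed

lemma pstar_out: "v \<notin> set (butlast g) \<Longrightarrow> pstar v = v"
proof -
  assume "v \<notin> set (butlast g)"
  then have "map_of (zip (butlast g) (tl g)) v = None" by (metis map_of_zip_is_None len_bt)
  then show ?thesis unfolding pstar_def by (simp only: option.case)
qed

lemma g_split: "g = butlast g @ [zz]" unfolding zz_def using g_ne by simp

lemma zz_bt: "zz \<notin> set (butlast g)" using g_dist g_split by (metis distinct_append not_distinct_conv_prefix)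

lemma set_g: "set g = insert zz (set (butlast g))" using g_split by (metis list.simps(15) rotate1.simps(2) set_rotate1 set_append Un_insert_right sup_bot.right_neutral)

lemma bt_nth: "v \<in> set (butlast g) \<Longrightarrow> \<exists>i. Suc i < length g \<and> v = g ! i"
proof -
  assume "v \<in> set (butlast g)"
  then obtain i where "i < length (butlast g)" "v = butlast g ! i" by (metis in_set_conv_nth)
  then show ?thesis by (intro exI[of _ i]) (auto simp: nth_butlast)
qed

lemma pstar_Sfix: "pstar \<in> Sfix d n A y zz"
  unfolding Sfix_def
proof (intro CollectI conjI allI impI ballI)
  fix u assume "u \<notin> A" then show "pstar u = u" using g_A set_g by (intro pstar_out) auto
next
  show "zz \<in> A" by (rule zzA)
next
  show "pstar zz = zz" using zz_bt pstar_out by simp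
next
  fix u assume "u \<in> A"
  show "pstar u = u \<or> nbr d n u (pstar u)"
  proof (cases "u \<in> set (butlast g)")
    case True
    then obtain i where "Suc i < length g" "u = g ! i" using bt_nth by blast
    then show ?thesis using pstar_nth g_nbr by auto
  next
    case False then show ?thesis using pstar_out by simp
  qed
next
  have inj: "inj_on pstar (A - {zz})"
  proof (rule inj_onI)
    fix a b assume a: "a \<in> A - {zz}" and b: "b \<in> A - {zz}" and e: "pstar a = pstar b"
    show "a = b"
    proof (cases "a \<in> set (butlast g)")
      case True
      then obtain i where i: "Suc i < length g" "a = g ! i" using bt_nth by blast
      show ?thesis
      proof (cases "b \<in> set (butlast g)")
        case True
        then obtain j where j: "Suc j < length g" "b = g ! j" using bt_nth by blast
        have "g ! Suc i = g ! Suc j" using e i j pstar_nth by simp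
        then have "i = j" using g_dist i j by (simp add: nth_eq_iff_index_eq)
        then show ?thesis using i j by simp
      next
        case False
        then have "b \<notin> set g" using b set_g by auto
        moreover have "pstar b = b" using False pstar_out by simp
        moreover have "pstar a \<in> set g" using i pstar_nth by simp
        ultimately show ?thesis using e by simp
      qed
    next
      case False
      then have an: "a \<notin> set g" using a set_g by auto
      show ?thesis
      proof (cases "b \<in> set (butlast g)")
        case True
        then obtain j where j: "Suc j < length g" "b = g ! j" using bt_nth by blast
        have "pstar b \<in> set g" using j pstar_nth by simp
        then show ?thesis using e an False pstar_out by simp
      next
        case False2: False
        then show ?thesis using e False pstar_out by simp
      qed
    qed
  qed
  have im: "pstar ` (A - {zz}) = A - {y}"
  proof
    show "pstar ` (A - {zz}) \<subseteq> A - {y}"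
    proof
      fix w assume "w \<in> pstar ` (A - {zz})"
      then obtain a where a: "a \<in> A - {zz}" "w = pstar a" by auto
      show "w \<in> A - {y}"
      proof (cases "a \<in> set (butlast g)")
        case True
        then obtain i where i: "Suc i < length g" "a = g ! i" using bt_nth by blast
        have "g ! Suc i \<noteq> g ! 0" using nth_eq_iff_index_eq[OF g_dist, of "Suc i" 0] i g_ne by simp
        then show ?thesis using a i pstar_nth g0 g_A by (auto intro: nth_mem)
      next
        case False
        then have "a \<notin> set g" using a set_g by auto
        then have "a \<noteq> y" using g_ne g_hd by auto
        then show ?thesis using a False pstar_out by simp
      qed
    qed
  next
    show "A - {y} \<subseteq> pstar ` (A - {zz})"
    proof
      fix w assume w: "w \<in> A - {y}"
      show "w \<in> pstar ` (A - {zz})"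
      proof (cases "w \<in> set g")
        case True
        then obtain j where j: "j < length g" "w = g ! j" by (metis in_set_conv_nth)
        have "j \<noteq> 0"
        proof
          assume "j = 0" then show False using j w g0 by simp
        qed
        then obtain i where i: "j = Suc i" by (cases j) auto
        have "g ! i \<in> set (butlast g)" using i j by (metis Suc_lessD length_butlast less_diff_conv nth_butlast nth_mem Suc_eq_plus1)
        then have "g ! i \<in> A - {zz}" using zz_bt g_A by (auto dest: in_set_butlastD)
        moreover have "pstar (g ! i) = w" using pstar_nth i j by simp
        ultimately show ?thesis by (metis imageI)
      next
        case False
        then have "w \<notin> set (butlast g)" "w \<noteq> zz" using set_g by auto
        then show ?thesis using w pstar_out by (metis DiffD1 DiffI image_eqI singletonD)
      qed
    qed
  qed
  show "bij_betw pstar (A - {zz}) (A - {y})" using inj im by (simp add: bij_betw_def)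
qed

lemma pstar_it: "j < length g \<Longrightarrow> (pstar ^^ j) y = g ! j"
proof (induction j)
  case 0 then show ?case using g0 by simp
next
  case (Suc j) then show ?case using pstar_nth by simp
qed

lemma pstar_gam: "gam pstar y = g"
proof -
  define L' where "L' = length g - 1"
  have lg: "length g = Suc L'" using g_ne unfolding L'_def by simp
  have "(LEAST j. (pstar ^^ Suc j) y = (pstar ^^ j) y) = L'"
  proof (rule Least_equality)
    have "(pstar ^^ L') y = zz" using pstar_it[of L'] lg g_ne unfolding zz_def by (simp add: last_conv_nth)
    then show "(pstar ^^ Suc L') y = (pstar ^^ L') y" using zz_bt pstar_out by simp
  next
    fix j assume e: "(pstar ^^ Suc j) y = (pstar ^^ j) y"
    show "L' \<le> j"
    proof (rule ccontr)
      assume "\<not> L' \<le> j"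
      then have j: "Suc j < length g" using lg by simp
      then have "g ! Suc j = g ! j" using e pstar_it[of j] pstar_it[of "Suc j"] by simp
      then show False using g_dist j by (simp add: nth_eq_iff_index_eq)
    qed
  qed
  then have "gam pstar y = map (\<lambda>j. (pstar ^^ j) y) [0..<length g]" unfolding gam_def lg by simp
  also have "\<dots> = map (\<lambda>j. g ! j) [0..<length g]" using pstar_it by simp
  also have "\<dots> = g" by (simp add: map_nth)
  finally show ?thesis .
qed

lemma pstar_S: "pstar \<in> S" using S_char pstar_Sfix pstar_gam by simp

end


context mc begin

abbreviation rf where "rf \<equiv> refl_pt n x"

definition step :: "(pt \<Rightarrow> pt) \<Rightarrow> (pt \<times> pt) set" where
  "step q = {(a, b). a \<in> Lam d n \<and> b \<in> Lam d n \<and> (b = q a \<or> a = q b \<or> b = rf a \<or> a = rf b)}"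

definition E :: "(pt \<Rightarrow> pt) \<Rightarrow> pt \<Rightarrow> int \<Rightarrow> bool" where
  "E q u k \<longleftrightarrow> (\<exists>t. (u, t) \<in> (step q)\<^sup>* \<and> hd t \<le> hd u - k)"

lemma rfL: "u \<in> Lam d n \<Longrightarrow> rf u \<in> Lam d n" using refl_Lam[OF n1 d1 xL] by blast
lemma rfrf: "u \<in> Lam d n \<Longrightarrow> rf (rf u) = u" using refl_refl[OF n1 d1 xL] by blast
lemma rf_hd: "hd (rf u) = hd u" by (rule refl_hd)

lemma step_sym: "(a, b) \<in> step q \<Longrightarrow> (b, a) \<in> step q" unfolding step_def by auto

lemma step_L: "(a, b) \<in> step q \<Longrightarrow> a \<in> Lam d n \<and> b \<in> Lam d n" unfolding step_def by auto

lemma S_dist: "\<pi> \<in> S \<Longrightarrow> distinct (gam \<pi> y)" using S_gam g_dist by simp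

lemma p_Lam: assumes "\<pi> \<in> S" and v: "v \<in> Lam d n" shows "pi0 \<pi> y v \<in> Lam d n"
proof -
  interpret sf d n A y zz \<pi> using S_sf[OF assms(1)] .
  show ?thesis using p_B p_out v AL by (cases "v \<in> A") auto
qed

lemma p_pre: assumes "\<pi> \<in> S" and v: "v \<in> Lam d n" shows "\<exists>w \<in> Lam d n. pi0 \<pi> y w = v"
proof -
  interpret sf d n A y zz \<pi> using S_sf[OF assms(1)] .
  obtain w where w: "pi0 \<pi> y w = v" "v \<in> A \<longrightarrow> w \<in> A" using p_surj[OF S_dist[OF assms(1)]] by blast
  show ?thesis
  proof (cases "v \<in> A")
    case True then show ?thesis using w AL by auto
  next
    case False
    then have "w \<notin> A" using w p_B by auto
    then have "pi0 \<pi> y w = w" using p_out by simp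
    then show ?thesis using w v by auto
  qed
qed

lemma Cone_props: "u \<in> Cone d n x \<Longrightarrow> u \<in> Lam d n \<and> hd x \<le> hd u"
proof -
  assume u: "u \<in> Cone d n x"
  have ln0: "ln (real n) \<ge> 0" using n1 by simp
  show ?thesis using u tdist_nonneg[OF n1, of "tl u" "tl x"] ln0 unfolding Cone_def by auto
qed

lemma high_A: "v \<in> Lam d n \<Longrightarrow> hd x \<le> hd v \<Longrightarrow> v \<in> A"
proof -
  assume v: "v \<in> Lam d n" "hd x \<le> hd v"
  have "real_of_int (hd v) \<ge> real_of_int (hd y) + ln (real n)" using v xh by linarith
  then show ?thesis using wadm v unfolding weakly_adm_def by auto
qed

lemma regen_crit:
  assumes pS: "\<pi> \<in> S" and pre: "prereg d n g x"
    and good: "\<forall>u\<in>Cone d n x. \<not> E (pi0 \<pi> y) u (hd u - hd x + 1)"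
  shows "regen d n A y \<pi> x"
proof -
  let ?p = "pi0 \<pi> y"
  define R where "R = {v \<in> Lam d n. hd x \<le> hd v \<and> (\<forall>t. (v, t) \<in> (step ?p)\<^sup>* \<longrightarrow> hd x \<le> hd t)}"
  have RL: "R \<subseteq> Lam d n" unfolding R_def by auto
  have Rstep: "v \<in> R \<Longrightarrow> (v, w) \<in> step ?p \<Longrightarrow> w \<in> R" for v w
  proof -
    assume v: "v \<in> R" and s: "(v, w) \<in> step ?p"
    have wL: "w \<in> Lam d n" using step_L[OF s] by simp
    have "\<forall>t. (w, t) \<in> (step ?p)\<^sup>* \<longrightarrow> hd x \<le> hd t"
    proof (intro allI impI)
      fix t assume "(w, t) \<in> (step ?p)\<^sup>*"
      then have "(v, t) \<in> (step ?p)\<^sup>*" using s by (rule converse_rtrancl_into_rtrancl[rotated])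
      then show "hd x \<le> hd t" using v unfolding R_def by blast
    qed
    moreover have "hd x \<le> hd w" using calculation by blast
    ultimately show "w \<in> R" using wL unfolding R_def by simp
  qed
  have ConeR: "Cone d n x \<subseteq> R"
  proof
    fix u assume u: "u \<in> Cone d n x"
    have cp: "u \<in> Lam d n" "hd x \<le> hd u" using Cone_props[OF u] by auto
    have "\<forall>t. (u, t) \<in> (step ?p)\<^sup>* \<longrightarrow> hd x \<le> hd t"
      using good u unfolding E_def by force
    then show "u \<in> R" using cp unfolding R_def by simp
  qed
  have "strictly_adm d n x R"
    unfolding strictly_adm_def adm_def weakly_adm_def
  proof (intro conjI)
    show "{u \<in> Lam d n. real_of_int (hd x) + ln (real n) \<le> real_of_int (hd u)} \<subseteq> R"
      using ConeR unfolding Cone_def by auto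
    show "{u \<in> Lam d n. hd x \<le> hd u \<and> tl u = tl x} \<subseteq> R"
      using ConeR unfolding Cone_def by (auto simp: tdist_self)
    show "Cone d n x \<subseteq> R" by (rule ConeR)
  qed
  moreover have "R \<subseteq> A" using high_A unfolding R_def by auto
  moreover have "\<forall>u\<in>R. hd x \<le> hd u" unfolding R_def by auto
  moreover have "\<forall>u\<in>R. refl_pt n x u \<in> R"
  proof
    fix u assume u: "u \<in> R"
    then have uL: "u \<in> Lam d n" using RL by auto
    have "(u, rf u) \<in> step ?p" using uL rfL[OF uL] unfolding step_def by auto
    then show "refl_pt n x u \<in> R" using Rstep u by simp
  qed
  moreover have "?p ` R = R"
  proof
    show "?p ` R \<subseteq> R"
    proof
      fix w assume "w \<in> ?p ` R"
      then obtain u where u: "u \<in> R" "w = ?p u" by auto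
      then have uL: "u \<in> Lam d n" using RL by auto
      have "(u, ?p u) \<in> step ?p" using uL p_Lam[OF pS uL] unfolding step_def by auto
      then show "w \<in> R" using Rstep u by simp
    qed
  next
    show "R \<subseteq> ?p ` R"
    proof
      fix u assume u: "u \<in> R"
      then have uL: "u \<in> Lam d n" using RL by auto
      obtain w where w: "w \<in> Lam d n" "?p w = u" using p_pre[OF pS uL] by blast
      have "(u, w) \<in> step ?p" using uL w unfolding step_def by auto
      then have "w \<in> R" using Rstep u by simp
      then show "u \<in> ?p ` R" using w by auto
    qed
  qed
  moreover have "prereg d n (gam \<pi> y) x" using pre S_gam[OF pS] by simp
  ultimately show ?thesis unfolding regen_def by blast
qed

end


definition orb :: "(pt \<Rightarrow> pt) \<Rightarrow> pt \<Rightarrow> pt list" where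
  "orb q c = map (\<lambda>i. (q ^^ i) c) [0..<(LEAST m. 0 < m \<and> (q ^^ m) c = c)]"

lemma orb_props:
  assumes inj: "inj q" and m0: "0 < m0" "(q ^^ m0) c = c" and qc: "q c \<noteq> c"
  shows "orb q c \<noteq> [] \<and> orb q c ! 0 = c \<and> length (orb q c) \<ge> 2 \<and> distinct (orb q c) \<and>
         (\<forall>i < length (orb q c). q (orb q c ! i) = orb q c ! ((i + 1) mod length (orb q c))) \<and>
         (\<forall>v \<in> set (orb q c). q v \<noteq> v) \<and> q ` set (orb q c) \<subseteq> set (orb q c)"
proof -
  define m where "m = (LEAST m. 0 < m \<and> (q ^^ m) c = c)"
  have mp: "0 < m \<and> (q ^^ m) c = c" unfolding m_def by (rule LeastI[of _ m0]) (use m0 in auto)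
  have mmin: "0 < j \<Longrightarrow> j < m \<Longrightarrow> (q ^^ j) c \<noteq> c" for j
    unfolding m_def using not_less_Least by blast
  have cs: "orb q c = map (\<lambda>i. (q ^^ i) c) [0..<m]" unfolding orb_def m_def ..
  have len: "length (orb q c) = m" using cs by simp
  have nth: "i < m \<Longrightarrow> orb q c ! i = (q ^^ i) c" for i using cs by simp
  have m2: "m \<ge> 2"
  proof (rule ccontr)
    assume "\<not> m \<ge> 2"
    then have "m = 1" using mp by simp
    then show False using mp qc by simp
  qed
  have dist: "distinct (orb q c)"
  proof -
    have "inj_on (\<lambda>k. (q ^^ k) c) {0..<m}" using mp mmin by (intro inj_on_funpow_least) auto
    then show ?thesis using cs by (simp add: distinct_map)
  qed
  have step: "\<forall>i < m. q (orb q c ! i) = orb q c ! ((i + 1) mod m)"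
  proof (intro allI impI)
    fix i assume i: "i < m"
    show "q (orb q c ! i) = orb q c ! ((i + 1) mod m)"
    proof (cases "i + 1 < m")
      case True then show ?thesis using nth i by simp
    next
      case False
      then have "i + 1 = m" using i by simp
      then have "q ((q ^^ i) c) = c" using mp by (metis Suc_eq_plus1 comp_apply funpow.simps(2))
      then show ?thesis using nth i mp m2 \<open>i + 1 = m\<close> by simp
    qed
  qed
  have moved: "\<forall>v \<in> set (orb q c). q v \<noteq> v"
  proof
    fix v assume "v \<in> set (orb q c)"
    then obtain i where i: "i < m" "v = orb q c ! i" using len by (metis in_set_conv_nth)
    have "(i + 1) mod m \<noteq> i"
    proof (cases "i + 1 < m")
      case True then show ?thesis by simp
    next
      case False then have "i + 1 = m" using i by simp
      then show ?thesis using m2 by simp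
    qed
    then have "orb q c ! ((i + 1) mod m) \<noteq> orb q c ! i"
      using dist len i m2 by (simp add: nth_eq_iff_index_eq)
    then show "q v \<noteq> v" using step i by simp
  qed
  have inv: "q ` set (orb q c) \<subseteq> set (orb q c)"
  proof
    fix w assume "w \<in> q ` set (orb q c)"
    then obtain i where i: "i < m" "w = q (orb q c ! i)" using len by (metis imageE in_set_conv_nth)
    then have "w = orb q c ! ((i + 1) mod m)" using step by simp
    moreover have "(i + 1) mod m < m" using m2 by simp
    ultimately show "w \<in> set (orb q c)" using len by simp
  qed
  have "orb q c ! 0 = c" using nth[of 0] m2 by simp
  then show ?thesis using len m2 dist step moved inv by auto
qed

context mc begin

definition SF where "SF F = {\<pi> \<in> S. \<forall>v\<in>F. \<pi> v = v}"
definition Z where "Z \<alpha> F = (\<Sum>\<pi>\<in>SF F. wt \<alpha> \<pi>)"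
definition Q where "Q \<alpha> F u k = (\<Sum>\<pi>\<in>{\<pi>\<in>SF F. E (pi0 \<pi> y) u k}. wt \<alpha> \<pi>)"

lemma wt_pos: "wt \<alpha> \<pi> > 0" unfolding wt_def by simp

lemma finite_SF: "finite (SF F)" using finite_S unfolding SF_def by auto

lemma Z_nonneg: "Z \<alpha> F \<ge> 0" unfolding Z_def using wt_pos by (simp add: sum_nonneg less_imp_le)

lemma Q_le_Z: "Q \<alpha> F u k \<le> Z \<alpha> F"
  unfolding Q_def Z_def using finite_SF wt_pos by (intro sum_mono2) (auto simp: less_imp_le)

lemma Q_nonneg: "Q \<alpha> F u k \<ge> 0" unfolding Q_def using wt_pos by (simp add: sum_nonneg less_imp_le)

lemma Z_anti: "Z \<alpha> (F \<union> G) \<le> Z \<alpha> F"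
  unfolding Z_def using finite_SF wt_pos by (intro sum_mono2) (auto simp: SF_def less_imp_le)

lemma path_split:
  assumes qq: "q' = (\<lambda>v. if v \<in> C then v else q v)" and inv: "q ` C \<subseteq> C" and CL: "C \<subseteq> Lam d n"
    and path: "(a, t) \<in> (step q)\<^sup>*" and a: "a \<in> C \<union> rf ` C"
  shows "t \<in> C \<union> rf ` C \<or> (\<exists>v \<in> C \<union> rf ` C. (v, t) \<in> (step q')\<^sup>*)"
  using path
proof (induction rule: rtrancl_induct)
  case base then show ?case using a by simp
next
  case (step w w')
  let ?D = "C \<union> rf ` C"
  have wL: "w \<in> Lam d n" and w'L: "w' \<in> Lam d n" using step_L[OF step.hyps(2)] by auto
  have s: "w' = q w \<or> w = q w' \<or> w' = rf w \<or> w = rf w'" using step.hyps(2) unfolding step_def by auto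
  show ?case
  proof (cases "w' \<in> ?D")
    case True then show ?thesis by simp
  next
    case w'D: False
    then have w'C: "w' \<notin> C" by simp
    show ?thesis
    proof (cases "w \<in> ?D")
      case wD: True
      have "(w, w') \<in> step q'"
      proof -
        have "w' = q' w \<or> w = q' w' \<or> w' = rf w \<or> w = rf w'"
        proof -
          { assume e: "w' = q w"
            have "w \<notin> C" using e inv w'C by auto
            then have "w' = q' w" using e qq by simp }
          moreover
          { assume e: "w = q w'" then have "w = q' w'" using qq w'C by simp }
          moreover
          { assume e: "w' = rf w"
            have False
            proof (cases "w \<in> C")
              case True then show False using e w'D by auto
            next
              case False
              then obtain c where c: "c \<in> C" "w = rf c" using wD by auto
              have "w' = c" using e c rfrf CL by auto
              then show False using c w'C by simp
            qed }
          moreover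
          { assume e: "w = rf w'"
            have "w' = rf w" using e rfrf w'L by simp
            have False
            proof (cases "w \<in> C")
              case True then show False using \<open>w' = rf w\<close> w'D by auto
            next
              case False
              then obtain c where c: "c \<in> C" "w = rf c" using wD by auto
              have "w' = c" using \<open>w' = rf w\<close> c rfrf CL by auto
              then show False using c w'C by simp
            qed }
          ultimately show ?thesis using s by blast
        qed
        then show ?thesis using wL w'L unfolding step_def by auto
      qed
      then show ?thesis using wD by blast
    next
      case wD: False
      then have wC: "w \<notin> C" by simp
      then obtain v where v: "v \<in> ?D" "(v, w) \<in> (step q')\<^sup>*" using step.IH by auto
      have "(w, w') \<in> step q'"
        using s wC w'C qq wL w'L unfolding step_def by auto
      then show ?thesis using v by (meson rtrancl.rtrancl_into_rtrancl)
    qed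
  qed
qed

lemma no_move:
  assumes inj: "inj q" and u: "u \<in> Lam d n" and f1: "q u = u" and f2: "q (rf u) = rf u"
    and path: "(u, t) \<in> (step q)\<^sup>*"
  shows "t \<in> {u, rf u}"
  using path
proof (induction rule: rtrancl_induct)
  case base then show ?case by simp
next
  case (step w w')
  have w'L: "w' \<in> Lam d n" using step_L[OF step.hyps(2)] by auto
  have s: "w' = q w \<or> w = q w' \<or> w' = rf w \<or> w = rf w'" using step.hyps(2) unfolding step_def by auto
  have qw: "q w = w" using step.IH f1 f2 by auto
  have rr: "rf (rf u) = u" using rfrf[OF u] .
  show ?case
  proof -
    { assume "w' = q w" then have ?case using qw step.IH by simp }
    moreover { assume "w = q w'" then have "q w' = q w" using qw by simp
      then have "w' = w" using inj by (simp add: inj_eq)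
      then have ?case using step.IH by simp }
    moreover { assume "w' = rf w" then have ?case using step.IH rr by auto }
    moreover { assume "w = rf w'" then have "w' = rf w" using rfrf[OF w'L] by simp
      then have ?case using step.IH rr by auto }
    ultimately show ?case using s by blast
  qed
qed

end


context mc begin

lemma iter_eq_gam: assumes a: "\<And>j. (\<sigma> ^^ j) y = (\<tau> ^^ j) y" shows "gam \<sigma> y = gam \<tau> y"
  unfolding gam_def a by (rule refl)

lemma rem_S:
  assumes pS: "\<pi> \<in> S" and CA: "C \<subseteq> A" and Cg: "C \<inter> set g = {}" and pC: "\<pi> ` C = C"
  shows "(\<lambda>v. if v \<in> C then v else \<pi> v) \<in> S"
proof -
  interpret sf d n A y zz \<pi> using S_sf[OF pS] .
  let ?r = "\<lambda>v. if v \<in> C then v else \<pi> v"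
  have zzg: "zz \<in> set g" using g_ne unfolding zz_def by simp
  have yg: "y \<in> set g" using g_ne g_hd by (metis hd_in_set)
  have C1: "C \<subseteq> A - {zz}" using CA Cg zzg by auto
  have C2: "C \<subseteq> A - {y}" using CA Cg yg by auto
  have inj: "inj_on ?r (A - {zz})"
  proof (rule inj_onI)
    fix a b assume a: "a \<in> A - {zz}" and b: "b \<in> A - {zz}" and e: "?r a = ?r b"
    have pin: "v \<in> A - {zz} \<Longrightarrow> v \<notin> C \<Longrightarrow> \<pi> v \<notin> C" for v
    proof
      assume v: "v \<in> A - {zz}" "v \<notin> C" and pv: "\<pi> v \<in> C"
      then obtain c where c: "c \<in> C" "\<pi> v = \<pi> c" using pC by (metis imageE)
      have "v = c" using injB c v C1 by (meson inj_on_contraD subsetD)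
      then show False using v c by simp
    qed
    show "a = b"
    proof (cases "a \<in> C")
      case True
      show ?thesis
      proof (cases "b \<in> C")
        case True then show ?thesis using e \<open>a \<in> C\<close> by simp
      next
        case False then show ?thesis using e \<open>a \<in> C\<close> pin[OF b] by auto
      qed
    next
      case False
      show ?thesis
      proof (cases "b \<in> C")
        case True then show ?thesis using e \<open>a \<notin> C\<close> pin[OF a] by auto
      next
        case bC: False
        then have "\<pi> a = \<pi> b" using e \<open>a \<notin> C\<close> by simp
        then show ?thesis using injB a b by (meson inj_on_contraD)
      qed
    qed
  qed
  have im: "?r ` (A - {zz}) = A - {y}"
  proof -
    have "?r ` (A - {zz}) = ?r ` C \<union> ?r ` ((A - {zz}) - C)" using C1 by blast
    also have "?r ` C = C" by auto
    also have "?r ` ((A - {zz}) - C) = \<pi> ` ((A - {zz}) - C)" by auto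
    also have "\<dots> = \<pi> ` (A - {zz}) - \<pi> ` C" using injB C1 by (intro inj_on_image_set_diff) auto
    also have "\<dots> = (A - {y}) - C" using imB pC by simp
    finally show ?thesis using C2 by blast
  qed
  have "?r \<in> Sfix d n A y zz"
    unfolding Sfix_def
  proof (intro CollectI conjI allI impI ballI)
    fix u assume "u \<notin> A" then show "?r u = u" using out CA by auto
  next
    show "zz \<in> A" by (rule zzA)
  next
    show "?r zz = zz" using zzg Cg pz by auto
  next
    show "bij_betw ?r (A - {zz}) (A - {y})" using inj im by (simp add: bij_betw_def)
  next
    fix u assume "u \<in> A" then show "?r u = u \<or> nbr d n u (?r u)" using nb by auto
  qed
  moreover have "gam ?r y = g"
  proof -
    have "(?r ^^ j) y = (\<pi> ^^ j) y" for j
    proof (induction j)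
      case 0 then show ?case by simp
    next
      case (Suc j)
      have "(\<pi> ^^ j) y \<in> set g" using it_in S_gam[OF pS] by simp
      then have "(\<pi> ^^ j) y \<notin> C" using Cg by auto
      then show ?case using Suc by simp
    qed
    then have "gam ?r y = gam \<pi> y" by (rule iter_eq_gam)
    then show ?thesis using S_gam[OF pS] by simp
  qed
  ultimately show ?thesis using S_char by simp
qed

lemma rem_pi0:
  assumes pS: "\<pi> \<in> S" and CA: "C \<subseteq> A" and Cg: "C \<inter> set g = {}" and pC: "\<pi> ` C = C"
  shows "pi0 (\<lambda>v. if v \<in> C then v else \<pi> v) y = (\<lambda>v. if v \<in> C then v else pi0 \<pi> y v)"
proof -
  have "gam (\<lambda>v. if v \<in> C then v else \<pi> v) y = g" using rem_S[OF assms] S_gam by blast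
  then show ?thesis using S_gam[OF pS] Cg unfolding pi0_def by (intro ext) auto
qed

lemma rem_wt:
  assumes pS: "\<pi> \<in> S" and CA: "C \<subseteq> A" and mv: "\<forall>v\<in>C. \<pi> v \<noteq> v"
  shows "wt \<alpha> \<pi> = exp (- \<alpha> * real (card C)) * wt \<alpha> (\<lambda>v. if v \<in> C then v else \<pi> v)"
proof -
  interpret sf d n A y zz \<pi> using S_sf[OF pS] .
  let ?M = "{u. \<pi> u \<noteq> u}" and ?M' = "{u. (if u \<in> C then u else \<pi> u) \<noteq> u}"
  have MA: "?M \<subseteq> A" using out by auto
  have fM: "finite ?M" using MA fA finite_subset by blast
  have eq: "?M = ?M' \<union> C" using mv by auto
  have dj: "?M' \<inter> C = {}" by auto
  have fC: "finite C" using CA fA finite_subset by blast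
  have fM': "finite ?M'" using fM eq by auto
  have "card ?M = card ?M' + card C" using eq dj fC fM' by (simp add: card_Un_disjoint)
  then show ?thesis unfolding wt_def by (simp add: algebra_simps exp_add[symmetric])
qed

lemma orbit_S:
  assumes pS: "\<pi> \<in> S" and pc: "pi0 \<pi> y c \<noteq> c"
  defines "cs \<equiv> orb (pi0 \<pi> y) c"
  shows "cs \<noteq> [] \<and> cs ! 0 = c \<and> length cs \<ge> 2 \<and> distinct cs \<and> set cs \<subseteq> A \<and> set cs \<inter> set g = {} \<and>
         \<pi> ` set cs = set cs \<and> (\<forall>v\<in>set cs. \<pi> v \<noteq> v) \<and> set cs \<subseteq> Lam d n \<and>
         (\<forall>i < length cs. \<pi> (cs ! i) = cs ! ((i + 1) mod length cs)) \<and>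
         (\<forall>i. Suc i < length cs \<longrightarrow> nbr d n (cs ! i) (cs ! Suc i)) \<and>
         pi0 \<pi> y ` set cs \<subseteq> set cs"
proof -
  interpret sf d n A y zz \<pi> using S_sf[OF pS] .
  have dist: "distinct (gam \<pi> y)" by (rule S_dist[OF pS])
  obtain m0 where m0: "m0 > 0" "(p ^^ m0) c = c" using p_cycle[OF dist pc] by blast
  have P: "cs \<noteq> [] \<and> cs ! 0 = c \<and> length cs \<ge> 2 \<and> distinct cs \<and>
         (\<forall>i < length cs. p (cs ! i) = cs ! ((i + 1) mod length cs)) \<and>
         (\<forall>v \<in> set cs. p v \<noteq> v) \<and> p ` set cs \<subseteq> set cs"
    unfolding cs_def by (rule orb_props[OF p_inj[OF dist] m0 pc])
  have mv: "v \<in> set cs \<Longrightarrow> v \<in> A \<and> v \<notin> set g \<and> p v = \<pi> v \<and> nbr d n v (p v)" for v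
    using P p_moved S_gam[OF pS] by metis
  have sA: "set cs \<subseteq> A" using mv by auto
  have sg: "set cs \<inter> set g = {}" using mv by auto
  have pe: "p ` set cs = set cs" using endo_inj_surj[of "set cs" p] P p_inj[OF dist]
    by (meson List.finite_set inj_on_subset subset_UNIV)
  have pie: "\<pi> ` set cs = set cs" using pe mv by (metis (no_types, lifting) image_cong)
  have mvpi: "\<forall>v\<in>set cs. \<pi> v \<noteq> v" using mv P by metis
  have sL: "set cs \<subseteq> Lam d n" using sA AL by auto
  have stp: "\<forall>i < length cs. \<pi> (cs ! i) = cs ! ((i + 1) mod length cs)"
    using P mv by (metis nth_mem)
  have ch: "\<forall>i. Suc i < length cs \<longrightarrow> nbr d n (cs ! i) (cs ! Suc i)"
  proof (intro allI impI)
    fix i assume i: "Suc i < length cs"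
    then have "p (cs ! i) = cs ! Suc i" using P by (metis Suc_eq_plus1 Suc_lessD mod_less)
    then show "nbr d n (cs ! i) (cs ! Suc i)" using mv[of "cs ! i"] i by (metis Suc_lessD nth_mem)
  qed
  show ?thesis using P sA sg pie mvpi sL stp ch by blast
qed

end


lemma sum_cover:
  fixes w :: "'a \<Rightarrow> real"
  assumes fT: "finite T" and fD: "finite D" and cov: "\<forall>s\<in>T. \<exists>v\<in>D. s \<in> G v"
    and nn: "\<And>s. w s \<ge> 0" and fG: "\<And>v. finite (G v)"
  shows "sum w T \<le> (\<Sum>v\<in>D. sum w (G v))"
proof -
  have "sum w T \<le> (\<Sum>s\<in>T. \<Sum>v\<in>D. if s \<in> G v then w s else 0)"
  proof (rule sum_mono)
    fix s assume s: "s \<in> T"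
    then obtain v where v: "v \<in> D" "s \<in> G v" using cov by blast
    have "w s = (if s \<in> G v then w s else 0)" using v by simp
    also have "\<dots> \<le> (\<Sum>v\<in>D. if s \<in> G v then w s else 0)"
      using fD v nn by (intro member_le_sum) auto
    finally show "w s \<le> (\<Sum>v\<in>D. if s \<in> G v then w s else 0)" .
  qed
  also have "\<dots> = (\<Sum>v\<in>D. \<Sum>s\<in>T. if s \<in> G v then w s else 0)" by (rule sum.swap)
  also have "\<dots> \<le> (\<Sum>v\<in>D. sum w (G v))"
  proof (rule sum_mono)
    fix v assume "v \<in> D"
    have "(\<Sum>s\<in>T. if s \<in> G v then w s else 0) = sum w (T \<inter> G v)"
      using fT by (simp add: sum.If_cases Int_commute)
    also have "\<dots> \<le> sum w (G v)" using fG nn by (intro sum_mono2) auto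
    finally show "(\<Sum>s\<in>T. if s \<in> G v then w s else 0) \<le> sum w (G v)" .
  qed
  finally show ?thesis .
qed

context mc begin

definition I where
  "I u = {cs. cs \<noteq> [] \<and> distinct cs \<and> set cs \<subseteq> Lam d n \<and> cs ! 0 \<in> {u, rf u} \<and>
              (\<forall>i. Suc i < length cs \<longrightarrow> nbr d n (cs ! i) (cs ! Suc i))}"

lemma finite_I: "finite (I u)"
proof -
  have "I u \<subseteq> {xs. set xs \<subseteq> Lam d n \<and> length xs \<le> card (Lam d n)}"
  proof
    fix cs assume "cs \<in> I u"
    then have a: "set cs \<subseteq> Lam d n" "distinct cs" unfolding I_def by auto
    have "length cs = card (set cs)" using distinct_card[OF a(2)] by simp
    also have "\<dots> \<le> card (Lam d n)" using card_mono[OF finite_Lam a(1)] .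
    finally show "cs \<in> {xs. set xs \<subseteq> Lam d n \<and> length xs \<le> card (Lam d n)}" using a by simp
  qed
  then show ?thesis using finite_lists_length_le[OF finite_Lam] finite_subset by blast
qed

definition rem :: "pt list \<Rightarrow> (pt \<Rightarrow> pt) \<Rightarrow> pt \<Rightarrow> pt" where
  "rem cs \<pi> = (\<lambda>v. if v \<in> set cs then v else \<pi> v)"



lemma decomp:
  assumes u: "u \<in> Lam d n" and k: "k \<ge> 1"
  shows "Q \<alpha> F u k \<le> (\<Sum>cs\<in>I u. exp (- \<alpha> * real (length cs)) *
            ((if k < int (length cs) then Z \<alpha> (F \<union> set cs) else 0) +
             (\<Sum>v\<in>set cs \<union> rf ` set cs. Q \<alpha> (F \<union> set cs) v (k - int (length cs)))))"
proof -
  define X where "X = {\<pi>\<in>SF F. E (pi0 \<pi> y) u k}"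
  define cf where "cf \<pi> = (if pi0 \<pi> y u \<noteq> u then u else rf u)" for \<pi>
  define csf where "csf \<pi> = orb (pi0 \<pi> y) (cf \<pi>)" for \<pi>
  define Y where "Y cs = {\<pi> \<in> SF F. (\<forall>i<length cs. \<pi> (cs ! i) = cs ! ((i + 1) mod length cs)) \<and>
      set cs \<subseteq> A \<and> set cs \<inter> set g = {} \<and> \<pi> ` set cs = set cs \<and> (\<forall>v\<in>set cs. \<pi> v \<noteq> v) \<and>
      (k < int (length cs) \<or> (\<exists>v\<in>set cs \<union> rf ` set cs. E (pi0 (rem cs \<pi>) y) v (k - int (length cs))))}" for cs
  have fX: "finite X" unfolding X_def using finite_SF by simp
  have XS: "\<pi> \<in> X \<Longrightarrow> \<pi> \<in> S" for \<pi> unfolding X_def SF_def by auto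
  have rfu: "rf u \<in> Lam d n" using rfL[OF u] .
  have moved: "pi0 \<pi> y (cf \<pi>) \<noteq> cf \<pi>" if pX: "\<pi> \<in> X" for \<pi>
  proof (rule ccontr)
    assume nm: "\<not> pi0 \<pi> y (cf \<pi>) \<noteq> cf \<pi>"
    have pS: "\<pi> \<in> S" using XS[OF pX] .
    interpret sf d n A y zz \<pi> using S_sf[OF pS] .
    have f1: "pi0 \<pi> y u = u" and f2: "pi0 \<pi> y (rf u) = rf u" using nm unfolding cf_def by (auto split: if_splits)
    obtain t where t: "(u, t) \<in> (step (pi0 \<pi> y))\<^sup>*" "hd t \<le> hd u - k" using pX unfolding X_def E_def by auto
    have "t \<in> {u, rf u}" using no_move[OF p_inj[OF S_dist[OF pS]] u f1 f2 t(1)] .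
    then have "hd t = hd u" using rf_hd by auto
    then show False using t k by simp
  qed
  have cfL: "cf \<pi> \<in> Lam d n" for \<pi> using u rfu unfolding cf_def by simp
  have main: "csf \<pi> \<in> I u \<and> \<pi> \<in> Y (csf \<pi>)" if pX: "\<pi> \<in> X" for \<pi>
  proof -
    have pS: "\<pi> \<in> S" using XS[OF pX] .
    let ?p = "pi0 \<pi> y" and ?cs = "csf \<pi>"
    let ?C = "set ?cs"
    have O: "?cs \<noteq> [] \<and> ?cs ! 0 = cf \<pi> \<and> length ?cs \<ge> 2 \<and> distinct ?cs \<and> ?C \<subseteq> A \<and> ?C \<inter> set g = {} \<and>
         \<pi> ` ?C = ?C \<and> (\<forall>v\<in>?C. \<pi> v \<noteq> v) \<and> ?C \<subseteq> Lam d n \<and>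
         (\<forall>i < length ?cs. \<pi> (?cs ! i) = ?cs ! ((i + 1) mod length ?cs)) \<and>
         (\<forall>i. Suc i < length ?cs \<longrightarrow> nbr d n (?cs ! i) (?cs ! Suc i)) \<and> ?p ` ?C \<subseteq> ?C"
      unfolding csf_def by (rule orbit_S[OF pS moved[OF pX]])
    have inI: "?cs \<in> I u" using O unfolding I_def cf_def by auto
    let ?m = "length ?cs"
    let ?D = "?C \<union> rf ` ?C"
    have pr: "pi0 (rem ?cs \<pi>) y = (\<lambda>v. if v \<in> ?C then v else ?p v)"
      unfolding rem_def using rem_pi0[of \<pi> ?C] pS O by blast
    have hdC: "\<forall>i < ?m. hd (?cs ! i) \<ge> hd (?cs ! 0) - int i"
    proof (intro allI impI)
      fix i assume "i < ?m"
      then show "hd (?cs ! i) \<ge> hd (?cs ! 0) - int i"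
      proof (induction i)
        case 0 then show ?case by simp
      next
        case (Suc i)
        have "nbr d n (?cs ! i) (?cs ! Suc i)" using O Suc.prems by blast
        then have "\<bar>hd (?cs ! i) - hd (?cs ! Suc i)\<bar> \<le> 1" by (rule nbr_hd)
        then show ?case using Suc by simp
      qed
    qed
    have hc0: "hd (?cs ! 0) = hd u" using O unfolding cf_def by (auto simp: rf_hd)
    have hdD: "\<forall>w\<in>?D. hd w \<ge> hd u - int ?m + 1"
    proof
      fix w assume "w \<in> ?D"
      then obtain c where c: "c \<in> ?C" "hd w = hd c" using rf_hd by auto
      then obtain i where i: "i < ?m" "c = ?cs ! i" by (metis in_set_conv_nth)
      show "hd w \<ge> hd u - int ?m + 1" using hdC i c hc0 by force
    qed
    obtain t where t: "(u, t) \<in> (step ?p)\<^sup>*" "hd t \<le> hd u - k" using pX unfolding X_def E_def by auto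
    have c0D: "cf \<pi> \<in> ?D" using O by (metis UnI1 nth_mem length_greater_0_conv)
    have "(cf \<pi>, t) \<in> (step ?p)\<^sup>*"
    proof (cases "cf \<pi> = u")
      case True then show ?thesis using t by simp
    next
      case False
      then have "cf \<pi> = rf u" unfolding cf_def by (auto split: if_splits)
      then have "(cf \<pi>, u) \<in> step ?p" using u rfu unfolding step_def by auto
      then show ?thesis using t by (meson converse_rtrancl_into_rtrancl)
    qed
    from path_split[OF pr _ _ this c0D] O
    have "t \<in> ?D \<or> (\<exists>v\<in>?D. (v, t) \<in> (step (pi0 (rem ?cs \<pi>) y))\<^sup>*)" by blast
    then have ev: "k < int ?m \<or> (\<exists>v\<in>?D. E (pi0 (rem ?cs \<pi>) y) v (k - int ?m))"
    proof
      assume tD: "t \<in> ?D"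
      have "hd u - int ?m + 1 \<le> hd t" by (rule hdD[rule_format, OF tD])
      then have "k < int ?m" using t(2) by linarith
      then show ?thesis by simp
    next
      assume "\<exists>v\<in>?D. (v, t) \<in> (step (pi0 (rem ?cs \<pi>) y))\<^sup>*"
      then obtain v where v: "v \<in> ?D" "(v, t) \<in> (step (pi0 (rem ?cs \<pi>) y))\<^sup>*" by blast
      have "hd u - int ?m + 1 \<le> hd v" by (rule hdD[rule_format, OF v(1)])
      then have "hd t \<le> hd v - (k - int ?m)" using t(2) by linarith
      then show ?thesis using v unfolding E_def by blast
    qed
    have "\<pi> \<in> SF F" using pX unfolding X_def by simp
    then have "\<pi> \<in> Y ?cs" using O ev unfolding Y_def by blast
    then show ?thesis using inI by simp
  qed
  have "Q \<alpha> F u k = sum (wt \<alpha>) X" unfolding Q_def X_def ..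
  also have "\<dots> = (\<Sum>cs\<in>I u. sum (wt \<alpha>) {\<pi>. \<pi> \<in> X \<and> csf \<pi> = cs})"
    using main by (intro sum.group[symmetric] fX finite_I) auto
  also have "\<dots> \<le> (\<Sum>cs\<in>I u. sum (wt \<alpha>) (Y cs))"
  proof (rule sum_mono)
    fix cs assume "cs \<in> I u"
    have "Y cs \<subseteq> SF F" unfolding Y_def by auto
    then have "finite (Y cs)" using finite_SF finite_subset by blast
    then show "sum (wt \<alpha>) {\<pi>. \<pi> \<in> X \<and> csf \<pi> = cs} \<le> sum (wt \<alpha>) (Y cs)"
      using main wt_pos by (intro sum_mono2) (auto simp: less_imp_le)
  qed
  also have "\<dots> \<le> (\<Sum>cs\<in>I u. exp (- \<alpha> * real (length cs)) *
            ((if k < int (length cs) then Z \<alpha> (F \<union> set cs) else 0) +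
             (\<Sum>v\<in>set cs \<union> rf ` set cs. Q \<alpha> (F \<union> set cs) v (k - int (length cs)))))"
  proof (rule sum_mono)
    fix cs assume csI: "cs \<in> I u"
    let ?C = "set cs" and ?m = "length cs"
    let ?D = "?C \<union> rf ` ?C"
    have YS: "\<pi> \<in> Y cs \<Longrightarrow> \<pi> \<in> S" for \<pi> unfolding Y_def SF_def by auto
    have dcs: "distinct cs" using csI unfolding I_def by simp
    have fY: "finite (Y cs)" using finite_SF finite_subset[of "Y cs" "SF F"] unfolding Y_def by blast
    have wteq: "wt \<alpha> \<pi> = exp (- \<alpha> * real ?m) * wt \<alpha> (rem cs \<pi>)" if "\<pi> \<in> Y cs" for \<pi>
      using rem_wt[of \<pi> ?C \<alpha>] that YS[OF that] distinct_card[OF dcs] unfolding Y_def rem_def by auto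
    have inj: "inj_on (rem cs) (Y cs)"
    proof (rule inj_onI)
      fix \<pi>1 \<pi>2 assume p1: "\<pi>1 \<in> Y cs" and p2: "\<pi>2 \<in> Y cs" and e: "rem cs \<pi>1 = rem cs \<pi>2"
      show "\<pi>1 = \<pi>2"
      proof
        fix v show "\<pi>1 v = \<pi>2 v"
        proof (cases "v \<in> ?C")
          case True
          then obtain i where i: "i < ?m" "v = cs ! i" by (metis in_set_conv_nth)
          then show ?thesis using p1 p2 unfolding Y_def by auto
        next
          case False then show ?thesis using e unfolding rem_def by (metis (full_types))
        qed
      qed
    qed
    have img: "rem cs ` Y cs \<subseteq> {\<sigma> \<in> SF (F \<union> ?C). k < int ?m \<or> (\<exists>v\<in>?D. E (pi0 \<sigma> y) v (k - int ?m))}"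
    proof
      fix \<sigma> assume "\<sigma> \<in> rem cs ` Y cs"
      then obtain \<pi> where p: "\<pi> \<in> Y cs" "\<sigma> = rem cs \<pi>" by blast
      have pS: "\<pi> \<in> S" using YS[OF p(1)] .
      have "\<sigma> \<in> S" using rem_S[of \<pi> ?C] pS p unfolding Y_def rem_def by blast
      moreover have "\<forall>v\<in>F \<union> ?C. \<sigma> v = v" using p unfolding Y_def SF_def rem_def by auto
      ultimately show "\<sigma> \<in> {\<sigma> \<in> SF (F \<union> ?C). k < int ?m \<or> (\<exists>v\<in>?D. E (pi0 \<sigma> y) v (k - int ?m))}"
        using p unfolding Y_def SF_def by auto
    qed
    have "sum (wt \<alpha>) (Y cs) = (\<Sum>\<pi>\<in>Y cs. exp (- \<alpha> * real ?m) * wt \<alpha> (rem cs \<pi>))"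
      using wteq by (rule sum.cong[OF refl])
    also have "\<dots> = exp (- \<alpha> * real ?m) * (\<Sum>\<pi>\<in>Y cs. wt \<alpha> (rem cs \<pi>))" by (simp add: sum_distrib_left)
    also have "(\<Sum>\<pi>\<in>Y cs. wt \<alpha> (rem cs \<pi>)) = sum (wt \<alpha>) (rem cs ` Y cs)"
      using sum.reindex[OF inj, of "wt \<alpha>"] by simp
    also have "sum (wt \<alpha>) (rem cs ` Y cs) \<le> (if k < int ?m then Z \<alpha> (F \<union> ?C) else 0) +
             (\<Sum>v\<in>?D. Q \<alpha> (F \<union> ?C) v (k - int ?m))"
    proof (cases "k < int ?m")
      case True
      have "sum (wt \<alpha>) (rem cs ` Y cs) \<le> Z \<alpha> (F \<union> ?C)"
        unfolding Z_def using img finite_SF wt_pos by (intro sum_mono2) (auto simp: less_imp_le)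
      moreover have "0 \<le> (\<Sum>v\<in>?D. Q \<alpha> (F \<union> ?C) v (k - int ?m))" using Q_nonneg by (simp add: sum_nonneg)
      ultimately show ?thesis using True by simp
    next
      case False
      have "sum (wt \<alpha>) (rem cs ` Y cs) \<le> (\<Sum>v\<in>?D. sum (wt \<alpha>) {\<sigma>\<in>SF (F \<union> ?C). E (pi0 \<sigma> y) v (k - int ?m)})"
      proof (rule sum_cover)
        show "finite (rem cs ` Y cs)" using fY by simp
        show "finite ?D" by simp
        show "\<forall>s\<in>rem cs ` Y cs. \<exists>v\<in>?D. s \<in> {\<sigma>\<in>SF (F \<union> ?C). E (pi0 \<sigma> y) v (k - int ?m)}"
          using img False by blast
        show "\<And>s. 0 \<le> wt \<alpha> s" using wt_pos less_imp_le by blast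
        show "\<And>v. finite {\<sigma>\<in>SF (F \<union> ?C). E (pi0 \<sigma> y) v (k - int ?m)}" using finite_SF by simp
      qed
      then show ?thesis using False unfolding Q_def by simp
    qed
    finally show "sum (wt \<alpha>) (Y cs) \<le> exp (- \<alpha> * real ?m) *
            ((if k < int ?m then Z \<alpha> (F \<union> ?C) else 0) + (\<Sum>v\<in>?D. Q \<alpha> (F \<union> ?C) v (k - int ?m)))"
      by (simp add: mult_left_mono)
  qed
  finally show ?thesis .
qed

end


definition pw :: "real \<Rightarrow> int \<Rightarrow> real" where
  "pw \<rho> k = (if k \<le> 0 then 1 else \<rho> ^ nat k)"

lemma pw_shift:
  assumes r: "0 < \<rho>" "\<rho> \<le> 1" and k: "k \<ge> 1"
  shows "pw \<rho> (k - int m) \<le> pw \<rho> k / \<rho> ^ m"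
proof (cases "k - int m \<le> 0")
  case True
  have "\<rho> ^ m \<le> \<rho> ^ nat k" using True r by (intro power_decreasing) auto
  then have "1 \<le> \<rho> ^ nat k / \<rho> ^ m" using r by simp
  then show ?thesis using True k unfolding pw_def by simp
next
  case False
  then have e: "nat k = nat (k - int m) + m" by simp
  have "\<rho> ^ nat (k - int m) = \<rho> ^ nat k / \<rho> ^ m" using r by (subst e) (simp add: power_add)
  then show ?thesis using False k unfolding pw_def by simp
qed

lemma pw_nonneg: "0 < \<rho> \<Longrightarrow> pw \<rho> k \<ge> 0" unfolding pw_def by simp

context mc begin

lemma rec_bound:
  assumes r: "0 < \<rho>" "\<rho> \<le> 1"
    and th: "\<And>u. u \<in> Lam d n \<Longrightarrow> (\<Sum>cs\<in>I u. exp (- \<alpha> * real (length cs)) * (2 * real (length cs) + 1) / \<rho> ^ length cs) \<le> 1"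
  shows "u \<in> Lam d n \<Longrightarrow> Q \<alpha> F u k \<le> pw \<rho> k * Z \<alpha> F"
proof (induction "nat k" arbitrary: k F u rule: less_induct)
  case less
  show ?case
  proof (cases "k \<le> 0")
    case True then show ?thesis using Q_le_Z unfolding pw_def by simp
  next
    case False
    then have k1: "k \<ge> 1" by simp
    have tb: "exp (- \<alpha> * real (length cs)) *
            ((if k < int (length cs) then Z \<alpha> (F \<union> set cs) else 0) +
             (\<Sum>v\<in>set cs \<union> rf ` set cs. Q \<alpha> (F \<union> set cs) v (k - int (length cs))))
          \<le> pw \<rho> k * Z \<alpha> F * (exp (- \<alpha> * real (length cs)) * (2 * real (length cs) + 1) / \<rho> ^ length cs)"
      if cs: "cs \<in> I u" for cs
    proof -
      let ?m = "length cs" and ?C = "set cs"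
      let ?D = "?C \<union> rf ` ?C"
      have m1: "?m \<ge> 1" using cs unfolding I_def by (simp add: Suc_leI)
      have CL: "?C \<subseteq> Lam d n" using cs unfolding I_def by simp
      have DL: "?D \<subseteq> Lam d n" using CL rfL by auto
      have ZF: "Z \<alpha> (F \<union> ?C) \<le> Z \<alpha> F" by (rule Z_anti)
      have pwm: "pw \<rho> (k - int ?m) \<ge> 0" using pw_nonneg r by simp
      have qb: "Q \<alpha> (F \<union> ?C) v (k - int ?m) \<le> pw \<rho> (k - int ?m) * Z \<alpha> F" if v: "v \<in> ?D" for v
      proof -
        have vL: "v \<in> Lam d n" using DL v by auto
        have "Q \<alpha> (F \<union> ?C) v (k - int ?m) \<le> pw \<rho> (k - int ?m) * Z \<alpha> (F \<union> ?C)"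
        proof (cases "k - int ?m \<le> 0")
          case True then show ?thesis using Q_le_Z unfolding pw_def by simp
        next
          case False
          have "nat (k - int ?m) < nat k" using m1 False by linarith
          then show ?thesis using less.hyps vL by blast
        qed
        also have "\<dots> \<le> pw \<rho> (k - int ?m) * Z \<alpha> F" using ZF pwm by (simp add: mult_left_mono)
        finally show ?thesis .
      qed
      have cD: "card ?D \<le> 2 * ?m"
      proof -
        have "card ?D \<le> card ?C + card (rf ` ?C)" by (rule card_Un_le)
        also have "card (rf ` ?C) \<le> card ?C" by (rule card_image_le) simp
        finally show ?thesis using card_length[of cs] by linarith
      qed
      have s1: "(\<Sum>v\<in>?D. Q \<alpha> (F \<union> ?C) v (k - int ?m)) \<le> real (card ?D) * (pw \<rho> (k - int ?m) * Z \<alpha> F)"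
        using qb by (rule sum_bounded_above)
      also have "\<dots> \<le> real (2 * ?m) * (pw \<rho> (k - int ?m) * Z \<alpha> F)"
        using cD pwm Z_nonneg by (intro mult_right_mono) auto
      finally have s1': "(\<Sum>v\<in>?D. Q \<alpha> (F \<union> ?C) v (k - int ?m)) \<le> 2 * real ?m * (pw \<rho> (k - int ?m) * Z \<alpha> F)"
        by simp
      have s0: "(if k < int ?m then Z \<alpha> (F \<union> ?C) else 0) \<le> pw \<rho> (k - int ?m) * Z \<alpha> F"
      proof (cases "k < int ?m")
        case True then have "pw \<rho> (k - int ?m) = 1" unfolding pw_def by simp
        then show ?thesis using ZF True by simp
      next
        case False then show ?thesis using pwm Z_nonneg by simp
      qed
      have "(if k < int ?m then Z \<alpha> (F \<union> ?C) else 0) + (\<Sum>v\<in>?D. Q \<alpha> (F \<union> ?C) v (k - int ?m))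
            \<le> (2 * real ?m + 1) * (pw \<rho> (k - int ?m) * Z \<alpha> F)"
        using s0 s1' by (simp add: algebra_simps)
      also have "\<dots> \<le> (2 * real ?m + 1) * (pw \<rho> k / \<rho> ^ ?m * Z \<alpha> F)"
        using pw_shift[OF r k1, of ?m] Z_nonneg by (intro mult_left_mono mult_right_mono) auto
      finally have bnd: "(if k < int ?m then Z \<alpha> (F \<union> ?C) else 0) + (\<Sum>v\<in>?D. Q \<alpha> (F \<union> ?C) v (k - int ?m))
          \<le> (2 * real ?m + 1) * (pw \<rho> k / \<rho> ^ ?m * Z \<alpha> F)" .
      have "exp (- \<alpha> * real ?m) * ((if k < int ?m then Z \<alpha> (F \<union> ?C) else 0) + (\<Sum>v\<in>?D. Q \<alpha> (F \<union> ?C) v (k - int ?m)))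
          \<le> exp (- \<alpha> * real ?m) * ((2 * real ?m + 1) * (pw \<rho> k / \<rho> ^ ?m * Z \<alpha> F))"
        by (rule mult_left_mono[OF bnd]) simp
      also have "\<dots> = pw \<rho> k * Z \<alpha> F * (exp (- \<alpha> * real ?m) * (2 * real ?m + 1) / \<rho> ^ ?m)"
        by (simp add: divide_inverse mult_ac)
      finally show ?thesis .
    qed
    have "Q \<alpha> F u k \<le> (\<Sum>cs\<in>I u. exp (- \<alpha> * real (length cs)) *
            ((if k < int (length cs) then Z \<alpha> (F \<union> set cs) else 0) +
             (\<Sum>v\<in>set cs \<union> rf ` set cs. Q \<alpha> (F \<union> set cs) v (k - int (length cs)))))"
      by (rule decomp[OF less.prems k1])
    also have "\<dots> \<le> (\<Sum>cs\<in>I u. pw \<rho> k * Z \<alpha> F * (exp (- \<alpha> * real (length cs)) * (2 * real (length cs) + 1) / \<rho> ^ length cs))"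
      using tb by (rule sum_mono)
    also have "\<dots> = pw \<rho> k * Z \<alpha> F * (\<Sum>cs\<in>I u. exp (- \<alpha> * real (length cs)) * (2 * real (length cs) + 1) / \<rho> ^ length cs)"
      by (simp add: sum_distrib_left)
    also have "\<dots> \<le> pw \<rho> k * Z \<alpha> F * 1"
      using th[OF less.prems] pw_nonneg[OF r(1)] Z_nonneg by (intro mult_left_mono) auto
    finally show ?thesis by simp
  qed
qed

end


definition W :: "nat \<Rightarrow> nat \<Rightarrow> pt \<Rightarrow> nat \<Rightarrow> pt list set" where
  "W d n a m = {cs. length cs = Suc m \<and> cs ! 0 = a \<and> (\<forall>i. Suc i < length cs \<longrightarrow> nbr d n (cs ! i) (cs ! Suc i))}"

lemma card_W:
  assumes n: "n \<ge> 1" and d: "d \<ge> 1"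
  shows "finite (W d n a m) \<and> card (W d n a m) \<le> (3 ^ d) ^ m"
proof (induction m arbitrary: a)
  case 0
  have "W d n a 0 = {[a]}" unfolding W_def by (auto simp: length_Suc_conv)
  then show ?case by simp
next
  case (Suc m)
  let ?N = "{b. nbr d n a b}"
  have fN: "finite ?N" and cN: "card ?N \<le> 3 ^ d" using card_nbr[OF n d] by auto
  have sub: "W d n a (Suc m) \<subseteq> (\<lambda>(b, ws). a # ws) ` (Sigma ?N (\<lambda>b. W d n b m))"
  proof
    fix cs assume cs: "cs \<in> W d n a (Suc m)"
    then obtain ws where ws: "cs = a # ws" "length ws = Suc m"
      unfolding W_def by (cases cs) auto
    have ch: "\<forall>i. Suc i < length cs \<longrightarrow> nbr d n (cs ! i) (cs ! Suc i)" using cs unfolding W_def by simp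
    have "nbr d n a (ws ! 0)" using ch[rule_format, of 0] ws by simp
    moreover have "ws \<in> W d n (ws ! 0) m"
      unfolding W_def using ws ch by (auto simp: nth_Cons_Suc)
    ultimately show "cs \<in> (\<lambda>(b, ws). a # ws) ` (Sigma ?N (\<lambda>b. W d n b m))" using ws by force
  qed
  have fS: "finite (Sigma ?N (\<lambda>b. W d n b m))" using fN Suc.IH by auto
  have "card (W d n a (Suc m)) \<le> card ((\<lambda>(b, ws). a # ws) ` (Sigma ?N (\<lambda>b. W d n b m)))"
    using sub fS by (intro card_mono) auto
  also have "\<dots> \<le> card (Sigma ?N (\<lambda>b. W d n b m))" using fS by (rule card_image_le)
  also have "\<dots> = (\<Sum>b\<in>?N. card (W d n b m))" using fN Suc.IH by (simp add: card_SigmaI)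
  also have "\<dots> \<le> (\<Sum>b\<in>?N. (3 ^ d) ^ m)" using Suc.IH by (intro sum_mono) auto
  also have "\<dots> = card ?N * (3 ^ d) ^ m" by simp
  also have "\<dots> \<le> 3 ^ d * (3 ^ d) ^ m" using cN by simp
  finally show ?case using sub fS finite_subset by (auto simp: power_Suc)
qed

lemma two_m: "2 * real m + 1 \<le> 3 ^ m"
proof (induction m)
  case 0 then show ?case by simp
next
  case (Suc m)
  have "(1::real) \<le> 3 ^ m" by simp
  then show ?case using Suc by simp
qed

lemma geo3: "(\<Sum>m\<in>{1..N}. 2 * (1 / 3 :: real) ^ m) \<le> 1 - (1 / 3) ^ N"
proof (induction N)
  case 0 then show ?case by simp
next
  case (Suc N)
  have "(\<Sum>m\<in>{1..Suc N}. 2 * (1 / 3 :: real) ^ m) = (\<Sum>m\<in>{1..N}. 2 * (1 / 3) ^ m) + 2 * (1 / 3) ^ Suc N"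
    by (simp add: sum.atLeast1_atMost_eq)
  also have "\<dots> \<le> 1 - (1 / 3) ^ N + 2 * (1 / 3) ^ Suc N" using Suc by simp
  also have "\<dots> = 1 - (1 / 3) ^ Suc N" by simp
  finally show ?case .
qed

context mc begin

lemma Theta:
  assumes r: "0 < \<rho>" and al: "exp (- \<alpha>) \<le> \<rho> / (9 * 3 ^ d)" and u: "u \<in> Lam d n"
  shows "(\<Sum>cs\<in>I u. exp (- \<alpha> * real (length cs)) * (2 * real (length cs) + 1) / \<rho> ^ length cs) \<le> 1"
proof -
  define K :: nat where "K = 3 ^ d"
  define N where "N = card (Lam d n)"
  define f where "f m = exp (- \<alpha> * real m) * (2 * real m + 1) / \<rho> ^ m" for m
  have Kp: "K \<ge> 1" unfolding K_def by simp
  have lenI: "length cs \<in> {1..N}" if "cs \<in> I u" for cs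
  proof -
    have a: "set cs \<subseteq> Lam d n" "distinct cs" "cs \<noteq> []" using that unfolding I_def by auto
    have "length cs = card (set cs)" using distinct_card[OF a(2)] by simp
    also have "\<dots> \<le> N" unfolding N_def using card_mono[OF finite_Lam a(1)] .
    finally show ?thesis using a(3) by (simp add: Suc_leI)
  qed
  have "(\<Sum>cs\<in>I u. f (length cs)) = (\<Sum>m\<in>{1..N}. \<Sum>cs\<in>{cs \<in> I u. length cs = m}. f (length cs))"
    using lenI by (intro sum.group[symmetric] finite_I) auto
  also have "\<dots> = (\<Sum>m\<in>{1..N}. real (card {cs \<in> I u. length cs = m}) * f m)" by simp
  also have "\<dots> \<le> (\<Sum>m\<in>{1..N}. 2 * (1 / 3) ^ m)"
  proof (rule sum_mono)
    fix m assume m: "m \<in> {1..N}"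
    then obtain j where j: "m = Suc j" by (cases m) auto
    have sub: "{cs \<in> I u. length cs = m} \<subseteq> W d n u j \<union> W d n (rf u) j"
      unfolding I_def W_def using j by auto
    have c: "card {cs \<in> I u. length cs = m} \<le> 2 * K ^ j"
    proof -
      have "card {cs \<in> I u. length cs = m} \<le> card (W d n u j \<union> W d n (rf u) j)"
        using sub card_W[OF n1 d1] by (intro card_mono) auto
      also have "\<dots> \<le> card (W d n u j) + card (W d n (rf u) j)" by (rule card_Un_le)
      also have "\<dots> \<le> K ^ j + K ^ j" using card_W[OF n1 d1] unfolding K_def by (intro add_mono) auto
      finally show ?thesis by simp
    qed
    define t where "t = real K * exp (- \<alpha>) / \<rho>"
    have t0: "t \<ge> 0" unfolding t_def using r by simp
    have t9: "t \<le> 1 / 9" unfolding t_def K_def using al r by (simp add: field_simps)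
    have fm: "f m = exp (- \<alpha>) ^ m * (2 * real m + 1) / \<rho> ^ m"
      unfolding f_def by (simp add: exp_of_nat_mult[symmetric] mult.commute)
    have fnn: "f m \<ge> 0" unfolding f_def using r by simp
    have c1: "real (card {cs \<in> I u. length cs = m}) \<le> real (2 * K ^ j)" using c by (simp only: of_nat_le_iff)
    have c2: "real (card {cs \<in> I u. length cs = m}) \<le> 2 * real K ^ j" using c1 by simp
    have "real (card {cs \<in> I u. length cs = m}) * f m \<le> (2 * real K ^ j) * f m"
      using c2 fnn by (intro mult_right_mono) auto
    also have "\<dots> \<le> (2 * real K ^ m) * f m"
      using fnn Kp j by (intro mult_right_mono) auto
    also have "\<dots> = 2 * (2 * real m + 1) * t ^ m"
      unfolding fm t_def by (simp add: power_divide power_mult_distrib field_simps)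
    also have "\<dots> \<le> 2 * 3 ^ m * t ^ m" using two_m[of m] t0 by (intro mult_right_mono) auto
    also have "\<dots> = 2 * (3 * t) ^ m" by (simp add: power_mult_distrib)
    also have "\<dots> \<le> 2 * (1 / 3) ^ m" using t0 t9 by (intro mult_left_mono power_mono) auto
    finally show "real (card {cs \<in> I u. length cs = m}) * f m \<le> 2 * (1 / 3) ^ m" .
  qed
  also have "\<dots> \<le> 1" using geo3[of N] by (smt (verit) zero_le_power zero_le_divide_iff)
  finally show ?thesis unfolding f_def .
qed

end


lemma geo_half:
  assumes "0 \<le> q" "q \<le> (1::real) / 2"
  shows "(\<Sum>h\<in>{0..N}. q ^ h) \<le> 2 - 2 * q ^ (N + 1)"
proof (induction N)
  case 0 then show ?case using assms by simp
next
  case (Suc N)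
  have "(\<Sum>h\<in>{0..Suc N}. q ^ h) = (\<Sum>h\<in>{0..N}. q ^ h) + q ^ Suc N" by simp
  also have "\<dots> \<le> 2 - 2 * q ^ (N + 1) + q ^ Suc N" using Suc by simp
  also have "\<dots> \<le> 2 - 2 * q ^ (Suc N + 1)"
  proof -
    have "2 * q ^ (Suc N + 1) = (2 * q) * q ^ Suc N" by simp
    also have "\<dots> \<le> 1 * q ^ Suc N" using assms by (intro mult_right_mono) auto
    finally show ?thesis by simp
  qed
  finally show ?case .
qed

lemma exp3: "exp (3::real) \<ge> 4" using exp_ge_add_one_self[of 3] by simp

lemma rho_bounds:
  fixes d :: nat
  assumes d1: "d \<ge> 1"
  defines "\<rho> \<equiv> exp (- (3 * real d + 3))"
  shows "0 < \<rho> \<and> \<rho> \<le> 1 / 16 \<and> 3 ^ d * \<rho> \<le> 1 / 4"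
proof -
  have e: "exp (3 * real d + 3) = exp 3 ^ (d + 1)"
    by (simp add: exp_of_nat_mult[symmetric] algebra_simps exp_add)
  have "(4::real) ^ (d + 1) \<le> exp 3 ^ (d + 1)" using exp3 by (intro power_mono) auto
  then have ge: "4 ^ (d + 1) \<le> exp (3 * real d + 3)" using e by simp
  have r: "\<rho> = 1 / exp (3 * real d + 3)" unfolding \<rho>_def by (simp only: exp_minus inverse_eq_divide)
  have "(16::real) \<le> 4 ^ (d + 1)"
  proof (cases d)
    case 0 then show ?thesis using d1 by simp
  next
    case (Suc e)
    have "(4::real) ^ 2 \<le> 4 ^ (d + 1)" using Suc by (intro power_increasing) auto
    then show ?thesis by simp
  qed
  then have E16: "16 \<le> exp (3 * real d + 3)" using ge by linarith
  have a: "\<rho> \<le> 1 / 16" unfolding r using E16 by (intro divide_left_mono) auto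
  have "(3::real) ^ d * 4 \<le> 4 ^ d * 4" by (intro mult_right_mono power_mono) auto
  then have "3 ^ d * 4 \<le> exp (3 * real d + 3)" using ge by simp
  then have "3 ^ d / exp (3 * real d + 3) \<le> 1 / 4" by (simp add: pos_divide_le_eq)
  then have b: "3 ^ d * \<rho> \<le> 1 / 4" using r by simp
  show ?thesis using a b unfolding \<rho>_def by simp
qed

context mc begin

lemma cone_sum:
  assumes nb: "real n \<ge> 4 * 3 ^ d"
  defines "\<rho> \<equiv> exp (- (3 * real d + 3))"
  shows "(\<Sum>u\<in>Cone d n x. pw \<rho> (hd u - hd x + 1)) \<le> 1 / 2"
proof -
  have rb: "0 < \<rho>" "\<rho> \<le> 1 / 16" "3 ^ d * \<rho> \<le> 1 / 4" using rho_bounds[OF d1] unfolding \<rho>_def by auto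
  define C1 where "C1 = {u \<in> Lam d n. tdist n (tl u) (tl x) \<le> hd u - hd x}"
  define C2 where "C2 = {u \<in> Lam d n. real_of_int (hd u) \<ge> real_of_int (hd x) + ln (real n)}"
  have CE: "Cone d n x = C1 \<union> C2" unfolding Cone_def C1_def C2_def by auto
  have fC1: "finite C1" and fC2: "finite C2" unfolding C1_def C2_def using finite_Lam by auto
  define f where "f u = pw \<rho> (hd u - hd x + 1)" for u
  have fnn: "f u \<ge> 0" for u unfolding f_def using pw_nonneg rb by simp
  have split: "sum f (C1 \<union> C2) \<le> sum f C1 + sum f C2"
  proof -
    have "sum f (C1 \<union> C2) + sum f (C1 \<inter> C2) = sum f C1 + sum f C2" using fC1 fC2 by (rule sum.union_inter)
    moreover have "sum f (C1 \<inter> C2) \<ge> 0" using fnn by (simp add: sum_nonneg)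
    ultimately show ?thesis by linarith
  qed
  have lnn: "ln (real n) \<ge> 0" using n1 by simp
  have npos: "real n > 0" using n1 by simp
  have t2: "f u \<le> 1 / real n ^ (d + 1)" if u: "u \<in> C2" for u
  proof -
    let ?k = "hd u - hd x + 1"
    have kk: "real_of_int ?k \<ge> ln (real n) + 1" using u unfolding C2_def by simp
    then have kpos: "?k > 0" using lnn by linarith
    have "f u = \<rho> ^ nat ?k" unfolding f_def pw_def using kpos by simp
    also have "\<dots> = exp (- (3 * real d + 3) * real (nat ?k))" unfolding \<rho>_def
      by (simp add: exp_of_nat_mult[symmetric] mult.commute)
    also have "\<dots> \<le> exp (- (real (d + 1) * ln (real n)))"
    proof -
      have "real (nat ?k) \<ge> ln (real n)" using kk kpos by simp
      then have "real (d + 1) * ln (real n) \<le> (3 * real d + 3) * real (nat ?k)"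
        using lnn by (intro mult_mono) auto
      then show ?thesis by (subst exp_le_cancel_iff) (simp only: mult_minus_left neg_le_iff_le)
    qed
    also have "\<dots> = 1 / real n ^ (d + 1)"
    proof -
      have e1: "exp (real (d + 1) * ln (real n)) = real n ^ (d + 1)"
        using npos by (simp only: exp_of_nat_mult exp_ln)
      show ?thesis by (simp only: exp_minus e1 inverse_eq_divide)
    qed
    finally show ?thesis .
  qed
  have "sum f C2 \<le> real (card C2) * (1 / real n ^ (d + 1))"
    using t2 by (rule sum_bounded_above)
  also have "\<dots> \<le> real ((2 * n + 1) ^ d) * (1 / real n ^ (d + 1))"
  proof -
    have "card C2 \<le> card (Lam d n)" unfolding C2_def using finite_Lam by (intro card_mono) auto
    also have "\<dots> \<le> (2 * n + 1) ^ d" using card_Lam[OF n1 d1 xL] .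
    finally have "real (card C2) \<le> real ((2 * n + 1) ^ d)" by (simp only: of_nat_le_iff)
    then show ?thesis by (intro mult_right_mono) auto
  qed
  also have "\<dots> \<le> (3 * real n) ^ d * (1 / real n ^ (d + 1))"
  proof -
    have "real (2 * n + 1) \<le> 3 * real n" using n1 by simp
    then have "real (2 * n + 1) ^ d \<le> (3 * real n) ^ d" by (intro power_mono) auto
    then show ?thesis by (intro mult_right_mono) auto
  qed
  also have "\<dots> = 3 ^ d / real n" using npos by (simp add: power_mult_distrib field_simps)
  also have "\<dots> \<le> 1 / 4" using nb npos by (simp add: field_simps)
  finally have s2: "sum f C2 \<le> 1 / 4" .
  have hmap: "nat (hd u - hd x) \<in> {0..n}" if "u \<in> C1" for u
    using that Lam_hd[of u d n] Lam_hd[OF xL] unfolding C1_def by auto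
  have t1: "card {u \<in> C1. nat (hd u - hd x) = h} \<le> (2 * h + 1) ^ d" for h
  proof -
    have "{u \<in> C1. nat (hd u - hd x) = h} \<subseteq> box d n x h"
    proof
      fix u assume uu: "u \<in> {u \<in> C1. nat (hd u - hd x) = h}"
      then have uL: "u \<in> Lam d n" and td: "tdist n (tl u) (tl x) \<le> hd u - hd x" and hh: "nat (hd u - hd x) = h"
        unfolding C1_def by auto
      have tn: "0 \<le> tdist n (tl u) (tl x)" by (rule tdist_nonneg[OF n1])
      show "u \<in> box d n x h"
      proof (rule in_box[OF n1 d1 xL uL])
        show "\<bar>hd u - hd x\<bar> \<le> int h" using hh td tn by auto
        fix i assume i: "i < d - 1"
        have "cdist n (tl u ! i) (tl x ! i) \<le> tdist n (tl u) (tl x)"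
          using tdist_nth_le[OF _ _ n1, of "tl u" "tl x" i] Lam_len[OF uL] Lam_len[OF xL] i by simp
        then show "cdist n (tl u ! i) (tl x ! i) \<le> int h" using hh td tn by auto
      qed
    qed
    then show ?thesis using card_box[of d n x h] card_mono order_trans by metis
  qed
  have "sum f C1 = (\<Sum>h\<in>{0..n}. \<Sum>u\<in>{u \<in> C1. nat (hd u - hd x) = h}. f u)"
    using hmap by (intro sum.group[symmetric] fC1) auto
  also have "\<dots> = (\<Sum>h\<in>{0..n}. real (card {u \<in> C1. nat (hd u - hd x) = h}) * \<rho> ^ (h + 1))"
  proof (rule sum.cong[OF refl])
    fix h
    have "f u = \<rho> ^ (h + 1)" if "u \<in> {u \<in> C1. nat (hd u - hd x) = h}" for u
    proof -
      have "hd u - hd x \<ge> 0" using that tdist_nonneg[OF n1, of "tl u" "tl x"] unfolding C1_def by auto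
      then have "nat (hd u - hd x + 1) = h + 1" using that by auto
      then show ?thesis unfolding f_def pw_def using \<open>hd u - hd x \<ge> 0\<close> by simp
    qed
    then show "(\<Sum>u\<in>{u \<in> C1. nat (hd u - hd x) = h}. f u) = real (card {u \<in> C1. nat (hd u - hd x) = h}) * \<rho> ^ (h + 1)"
      by simp
  qed
  also have "\<dots> \<le> (\<Sum>h\<in>{0..n}. (3 ^ d * \<rho>) ^ h * \<rho>)"
  proof (rule sum_mono)
    fix h
    have "real (card {u \<in> C1. nat (hd u - hd x) = h}) \<le> real ((2 * h + 1) ^ d)" using t1 by (simp only: of_nat_le_iff)
    also have "\<dots> = (2 * real h + 1) ^ d" by (simp add: add.commute)
    also have "\<dots> \<le> (3 ^ h) ^ d" using two_m[of h] by (intro power_mono) auto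
    also have "\<dots> = (3 ^ d) ^ h" by (simp add: power_mult[symmetric] mult.commute)
    finally have "real (card {u \<in> C1. nat (hd u - hd x) = h}) * \<rho> ^ (h + 1) \<le> (3 ^ d) ^ h * \<rho> ^ (h + 1)"
      using rb by (intro mult_right_mono) auto
    then show "real (card {u \<in> C1. nat (hd u - hd x) = h}) * \<rho> ^ (h + 1) \<le> (3 ^ d * \<rho>) ^ h * \<rho>"
      by (simp add: power_mult_distrib mult_ac)
  qed
  also have "\<dots> = (\<Sum>h\<in>{0..n}. (3 ^ d * \<rho>) ^ h) * \<rho>" by (simp add: sum_distrib_right)
  also have "\<dots> \<le> 2 * \<rho>"
  proof -
    have "(\<Sum>h\<in>{0..n}. (3 ^ d * \<rho>) ^ h) \<le> 2 - 2 * (3 ^ d * \<rho>) ^ (n + 1)"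
      using rb by (intro geo_half) auto
    also have "\<dots> \<le> 2" using rb by simp
    finally show ?thesis using rb by (intro mult_right_mono) auto
  qed
  also have "\<dots> \<le> 1 / 4" using rb by simp
  finally have s1: "sum f C1 \<le> 1 / 4" .
  show ?thesis using split s1 s2 CE unfolding f_def by simp
qed

end


context mc begin

lemma main_mc:
  assumes pre: "prereg d n g x" and nb: "real n \<ge> 4 * 3 ^ d"
    and al: "\<alpha> > 3 * real d + 3 + ln (9 * 3 ^ d)"
  shows "cond_prob d n \<alpha> A y g x > 1 / 4"
proof -
  define \<rho> where "\<rho> = exp (- (3 * real d + 3))"
  have rb: "0 < \<rho>" "\<rho> \<le> 1 / 16" "3 ^ d * \<rho> \<le> 1 / 4" using rho_bounds[OF d1] unfolding \<rho>_def by auto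
  have ea: "exp (- \<alpha>) \<le> \<rho> / (9 * 3 ^ d)"
  proof -
    have e1: "exp (3 * real d + 3 + ln (9 * 3 ^ d)) \<le> exp \<alpha>" using al by (simp only: exp_le_cancel_iff less_imp_le)
    have e2: "exp (3 * real d + 3 + ln (9 * 3 ^ d)) = exp (3 * real d + 3) * (9 * 3 ^ d)"
      by (simp only: exp_add exp_ln zero_less_numeral zero_less_power mult_pos_pos)
    have h: "exp (3 * real d + 3) * (9 * 3 ^ d) \<le> exp \<alpha>" using e1 unfolding e2 .
    have "exp (- \<alpha>) = 1 / exp \<alpha>" by (simp add: exp_minus inverse_eq_divide)
    also have "\<dots> \<le> 1 / (exp (3 * real d + 3) * (9 * 3 ^ d))"
    proof -
      have pos: "0 < exp \<alpha> * (exp (3 * real d + 3) * (9 * 3 ^ d))" by (intro mult_pos_pos) simp_all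
      show ?thesis by (rule divide_left_mono[OF h zero_le_one pos])
    qed
    also have "\<dots> = \<rho> / (9 * 3 ^ d)"
    proof -
      have gen: "(1::real) / (a * b) = inverse a / b" for a b by (simp add: divide_inverse)
      show ?thesis unfolding \<rho>_def exp_minus by (rule gen)
    qed
    finally show ?thesis .
  qed
  have Qb: "Q \<alpha> {} u k \<le> pw \<rho> k * Z \<alpha> {}" if "u \<in> Lam d n" for u k
    using rec_bound[OF rb(1) _ Theta[OF rb(1) ea]] rb that by auto
  define Bd where "Bd = {\<pi> \<in> S. \<not> regen d n A y \<pi> x}"
  define Gd where "Gd = {\<pi> \<in> S. regen d n A y \<pi> x}"
  have SF0: "SF {} = S" unfolding SF_def by simp
  have fC: "finite (Cone d n x)" unfolding Cone_def using finite_Lam by auto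
  have "sum (wt \<alpha>) Bd \<le> (\<Sum>u\<in>Cone d n x. sum (wt \<alpha>) {\<pi> \<in> SF {}. E (pi0 \<pi> y) u (hd u - hd x + 1)})"
  proof (rule sum_cover)
    show "finite Bd" unfolding Bd_def using finite_S by simp
    show "finite (Cone d n x)" by (rule fC)
    show "\<forall>s\<in>Bd. \<exists>v\<in>Cone d n x. s \<in> {\<pi> \<in> SF {}. E (pi0 \<pi> y) v (hd v - hd x + 1)}"
      using regen_crit[OF _ pre] SF0 unfolding Bd_def by blast
    show "\<And>s. 0 \<le> wt \<alpha> s" using wt_pos less_imp_le by blast
    show "\<And>v. finite {\<pi> \<in> SF {}. E (pi0 \<pi> y) v (hd v - hd x + 1)}" using finite_SF by simp
  qed
  also have "\<dots> = (\<Sum>u\<in>Cone d n x. Q \<alpha> {} u (hd u - hd x + 1))" unfolding Q_def ..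
  also have "\<dots> \<le> (\<Sum>u\<in>Cone d n x. pw \<rho> (hd u - hd x + 1) * Z \<alpha> {})"
    using Qb Cone_props by (intro sum_mono) blast
  also have "\<dots> = (\<Sum>u\<in>Cone d n x. pw \<rho> (hd u - hd x + 1)) * Z \<alpha> {}" by (simp add: sum_distrib_right)
  also have "\<dots> \<le> 1 / 2 * Z \<alpha> {}" using cone_sum[OF nb] Z_nonneg unfolding \<rho>_def by (intro mult_right_mono) auto
  finally have bB: "sum (wt \<alpha>) Bd \<le> 1 / 2 * Z \<alpha> {}" .
  have ZS: "Z \<alpha> {} = sum (wt \<alpha>) S" unfolding Z_def SF0 ..
  have split: "sum (wt \<alpha>) S = sum (wt \<alpha>) Gd + sum (wt \<alpha>) Bd"
  proof -
    have "S = Gd \<union> Bd" "Gd \<inter> Bd = {}" unfolding Gd_def Bd_def by auto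
    then show ?thesis using finite_S by (metis finite_Un sum.union_disjoint)
  qed
  have Zp: "sum (wt \<alpha>) S > 0"
  proof -
    have "wt \<alpha> pstar \<le> sum (wt \<alpha>) S" using pstar_S finite_S wt_pos by (intro member_le_sum) (auto simp: less_imp_le)
    then show ?thesis using wt_pos[of \<alpha> pstar] by linarith
  qed
  have num: "{\<pi> \<in> Sline d n A y. gam \<pi> y = g \<and> regen d n A y \<pi> x} = Gd" unfolding Gd_def S_def by auto
  have den: "{\<pi> \<in> Sline d n A y. gam \<pi> y = g} = S" unfolding S_def ..
  have "cond_prob d n \<alpha> A y g x = sum (wt \<alpha>) Gd / sum (wt \<alpha>) S"
    unfolding cond_prob_def num den ..
  moreover have "sum (wt \<alpha>) Gd \<ge> 1 / 2 * sum (wt \<alpha>) S" using split bB ZS by linarith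
  ultimately have "cond_prob d n \<alpha> A y g x \<ge> 1 / 2" using Zp by (simp add: le_divide_eq)
  then show ?thesis by simp
qed

end

theorem proposition5p5:
  fixes d :: nat
  assumes "d \<ge> 2"
  shows "\<exists>\<alpha>0::real. \<exists>c::real. c > 0 \<and> (\<exists>n0::nat. \<forall>n\<ge>n0. \<forall>\<alpha>>\<alpha>0.
     \<forall>y\<in>Lam d n. \<forall>A. A \<subseteq> Lam d n \<longrightarrow> weakly_adm d n y A \<longrightarrow>
     (\<forall>\<gamma>0. saw d n A y \<gamma>0 \<longrightarrow>
       (\<forall>x. prereg d n \<gamma>0 x \<longrightarrow> real_of_int (hd x - hd y) \<ge> ln (real n) \<longrightarrow>
          cond_prob d n \<alpha> A y \<gamma>0 x > c)))"
proof (intro exI conjI allI impI ballI)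
  show "(0::real) < 1 / 4" by simp
  fix n :: nat and \<alpha> :: real and y A \<gamma>0 x
  assume n: "4 * 3 ^ d \<le> n" and al: "3 * real d + 3 + ln (9 * 3 ^ d) < \<alpha>" and y: "y \<in> Lam d n"
    and AL: "A \<subseteq> Lam d n" and wa: "weakly_adm d n y A" and sw: "saw d n A y \<gamma>0"
    and pre: "prereg d n \<gamma>0 x" and xh: "ln (real n) \<le> real_of_int (hd x - hd y)"
  have "(1::nat) \<le> 3 ^ d" by simp
  then have n1: "n \<ge> 1" using n by linarith
  have "real (4 * 3 ^ d) \<le> real n" using n by (simp only: of_nat_le_iff)
  then have nr: "real n \<ge> 4 * 3 ^ d" by simp
  have xg: "x \<in> set \<gamma>0" using pre unfolding prereg_def by simp
  interpret mc d n A y \<gamma>0 x using n1 assms AL wa sw xg xh by unfold_locales auto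
  show "1 / 4 < cond_prob d n \<alpha> A y \<gamma>0 x" using main_mc[OF pre nr al] .
qed


end
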